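(* Let $(L_i)_{i\in I}$ be a family of upper continuous lattices with zero, pairwise intersecting in $\{0\}$, and let $L=\coprod^0_{i\in I}L_i$ with each $L_i$ identified with its canonical copy in $L$. Let $\Pi=\prod_{(i,n)\in I\times\omega}L_i$ (ordered componentwise), and for a lattice term $\mathbf{p}$ with variables from $I\times\omega$ and $\vec a=(a_{i,n})\in\Pi$ let $\mathbf{p}(\vec a)\in L$ denote the value of $\mathbf{p}$ in $L$ when each variable $(i,n)$ is assigned $a_{i,n}$. Let $\Lambda$ be an upward directed poset and $(\vec a^{\lambda})_{\lambda\in\Lambda}$ an isotone family of elements of $\Pi$ with supremum $\vec a$ in $\Pi$. Then for every lattice term $\mathbf{p}$ on $I\times\omega$, $\mathbf{p}(\vec a)=\bigvee_{\lambda\in\Lambda}\mathbf{p}(\vec a^{\lambda})$ in $L$.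
   Context: $\coprod^0$ denotes the coproduct in the category of lattices with zero and zero-preserving homomorphisms; $\omega$ is the set of natural numbers. A lattice $M$ is upper continuous if for each $a\in M$ and each upward directed subset $\{x_j: j\in J\}$ of $M$ that has a join, $a\wedge\bigvee_{j}x_j=\bigvee_j(a\wedge x_j)$. *)

theory Defs
  imports "HOL-Algebra.Lattice"
begin

datatype 'v lterm = LVar 'v | LJoin "'v lterm" "'v lterm" | LMeet "'v lterm" "'v lterm"

text \<open>Value of a term under an assignment of generators to its variables
  (the result is a term over the generators, i.e. an element of the free
  construction below): this is just substitution.\<close>

abbreviation lsubst :: "('v \<Rightarrow> 'a) \<Rightarrow> 'v lterm \<Rightarrow> 'a lterm" where
  "lsubst a p \<equiv> map_lterm a p"

definition directed_in :: "('a, 'b) gorder_scheme \<Rightarrow> 'a set \<Rightarrow> bool" where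
  "directed_in M X \<longleftrightarrow> X \<noteq> {} \<and>
     (\<forall>x\<in>X. \<forall>y\<in>X. \<exists>w\<in>X. x \<sqsubseteq>\<^bsub>M\<^esub> w \<and> y \<sqsubseteq>\<^bsub>M\<^esub> w)"

definition upper_continuous :: "('a, 'b) gorder_scheme \<Rightarrow> bool" where
  "upper_continuous M \<longleftrightarrow>
     (\<forall>a\<in>carrier M. \<forall>X s. X \<subseteq> carrier M \<and> directed_in M X \<and> is_lub M s X
        \<longrightarrow> is_lub M (a \<sqinter>\<^bsub>M\<^esub> s) ((\<lambda>x. a \<sqinter>\<^bsub>M\<^esub> x) ` X))"

definition cp_gens :: "('i \<Rightarrow> 'a gorder) \<Rightarrow> 'i set \<Rightarrow> 'a \<Rightarrow> 'a set" where
  "cp_gens L I z = insert z (\<Union>i\<in>I. carrier (L i))"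

text \<open>The preorder of the lattice presented by the generators and the relations
  saying that joins and meets inside each L i are preserved.  The quotient by
  the induced equivalence is the coproduct in the category of lattices with
  zero and zero-preserving homomorphisms (z is automatically the least element).\<close>

inductive cp_le :: "('i \<Rightarrow> 'a gorder) \<Rightarrow> 'i set \<Rightarrow> 'a \<Rightarrow> 'a lterm \<Rightarrow> 'a lterm \<Rightarrow> bool"
  for L I z where
  refl: "set_lterm t \<subseteq> cp_gens L I z \<Longrightarrow> cp_le L I z t t"
| trans: "cp_le L I z s t \<Longrightarrow> cp_le L I z t u \<Longrightarrow> cp_le L I z s u"
| join_upper1: "set_lterm s \<subseteq> cp_gens L I z \<Longrightarrow> set_lterm t \<subseteq> cp_gens L I z \<Longrightarrow>
     cp_le L I z s (LJoin s t)"
| join_upper2: "set_lterm s \<subseteq> cp_gens L I z \<Longrightarrow> set_lterm t \<subseteq> cp_gens L I z \<Longrightarrow>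
     cp_le L I z t (LJoin s t)"
| join_least: "cp_le L I z s u \<Longrightarrow> cp_le L I z t u \<Longrightarrow> cp_le L I z (LJoin s t) u"
| meet_lower1: "set_lterm s \<subseteq> cp_gens L I z \<Longrightarrow> set_lterm t \<subseteq> cp_gens L I z \<Longrightarrow>
     cp_le L I z (LMeet s t) s"
| meet_lower2: "set_lterm s \<subseteq> cp_gens L I z \<Longrightarrow> set_lterm t \<subseteq> cp_gens L I z \<Longrightarrow>
     cp_le L I z (LMeet s t) t"
| meet_greatest: "cp_le L I z u s \<Longrightarrow> cp_le L I z u t \<Longrightarrow> cp_le L I z u (LMeet s t)"
| gen_join1: "i \<in> I \<Longrightarrow> x \<in> carrier (L i) \<Longrightarrow> y \<in> carrier (L i) \<Longrightarrow>
     cp_le L I z (LJoin (LVar x) (LVar y)) (LVar (x \<squnion>\<^bsub>L i\<^esub> y))"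
| gen_join2: "i \<in> I \<Longrightarrow> x \<in> carrier (L i) \<Longrightarrow> y \<in> carrier (L i) \<Longrightarrow>
     cp_le L I z (LVar (x \<squnion>\<^bsub>L i\<^esub> y)) (LJoin (LVar x) (LVar y))"
| gen_meet1: "i \<in> I \<Longrightarrow> x \<in> carrier (L i) \<Longrightarrow> y \<in> carrier (L i) \<Longrightarrow>
     cp_le L I z (LMeet (LVar x) (LVar y)) (LVar (x \<sqinter>\<^bsub>L i\<^esub> y))"
| gen_meet2: "i \<in> I \<Longrightarrow> x \<in> carrier (L i) \<Longrightarrow> y \<in> carrier (L i) \<Longrightarrow>
     cp_le L I z (LVar (x \<sqinter>\<^bsub>L i\<^esub> y)) (LMeet (LVar x) (LVar y))"

definition cp_class :: "('i \<Rightarrow> 'a gorder) \<Rightarrow> 'i set \<Rightarrow> 'a \<Rightarrow> 'a lterm \<Rightarrow> 'a lterm set" where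
  "cp_class L I z s = {t. cp_le L I z s t \<and> cp_le L I z t s}"

definition coprod0 :: "('i \<Rightarrow> 'a gorder) \<Rightarrow> 'i set \<Rightarrow> 'a \<Rightarrow> 'a lterm set gorder" where
  "coprod0 L I z =
     \<lparr> carrier = {cp_class L I z s | s. set_lterm s \<subseteq> cp_gens L I z},
       eq = (=),
       le = (\<lambda>X Y. \<exists>s\<in>X. \<exists>t\<in>Y. cp_le L I z s t) \<rparr>"

definition prodL :: "('i \<Rightarrow> 'a gorder) \<Rightarrow> 'i set \<Rightarrow> ('i \<times> nat \<Rightarrow> 'a) gorder" where
  "prodL L I =
     \<lparr> carrier = {a. (\<forall>i\<in>I. \<forall>n. a (i, n) \<in> carrier (L i)) \<and>
                     (\<forall>i n. i \<notin> I \<longrightarrow> a (i, n) = undefined)},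
       eq = (=),
       le = (\<lambda>a b. \<forall>i\<in>I. \<forall>n. a (i, n) \<sqsubseteq>\<^bsub>L i\<^esub> b (i, n)) \<rparr>"

end

theory Submission
  imports Defs
begin


fun ole :: "('a,'b) gorder_scheme \<Rightarrow> 'a option \<Rightarrow> 'a option \<Rightarrow> bool" where
  "ole M x None = True"
| "ole M None (Some y) = False"
| "ole M (Some x) (Some y) = (x \<sqsubseteq>\<^bsub>M\<^esub> y)"

fun ojoin :: "('a,'b) gorder_scheme \<Rightarrow> 'a option \<Rightarrow> 'a option \<Rightarrow> 'a option" where
  "ojoin M (Some x) (Some y) = Some (x \<squnion>\<^bsub>M\<^esub> y)"
| "ojoin M _ _ = None"

fun omeet :: "('a,'b) gorder_scheme \<Rightarrow> 'a option \<Rightarrow> 'a option \<Rightarrow> 'a option" where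
  "omeet M None y = y"
| "omeet M x None = x"
| "omeet M (Some x) (Some y) = Some (x \<sqinter>\<^bsub>M\<^esub> y)"

locale cpx =
  fixes L :: "'i \<Rightarrow> 'a gorder" and I :: "'i set" and z :: 'a
  assumes lat: "\<And>i. i\<in>I \<Longrightarrow> lattice (L i)"
  and zin: "\<And>i. i\<in>I \<Longrightarrow> z \<in> carrier (L i)"
  and zle: "\<And>i x. i\<in>I \<Longrightarrow> x \<in> carrier (L i) \<Longrightarrow> z \<sqsubseteq>\<^bsub>L i\<^esub> x"
  and disj: "\<And>i j. i\<in>I \<Longrightarrow> j\<in>I \<Longrightarrow> i\<noteq>j \<Longrightarrow> carrier (L i) \<inter> carrier (L j) = {z}"
  and Ine: "I \<noteq> {}"
begin

lemma jcl: "i\<in>I \<Longrightarrow> x \<in> carrier (L i) \<Longrightarrow> y \<in> carrier (L i) \<Longrightarrow> x \<squnion>\<^bsub>L i\<^esub> y \<in> carrier (L i)"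
  proof - assume "i\<in>I" then interpret lattice "L i" by (rule lat) show "x \<in> carrier (L i) \<Longrightarrow> y \<in> carrier (L i) \<Longrightarrow> ?thesis" by simp qed
lemma mcl: "i\<in>I \<Longrightarrow> x \<in> carrier (L i) \<Longrightarrow> y \<in> carrier (L i) \<Longrightarrow> x \<sqinter>\<^bsub>L i\<^esub> y \<in> carrier (L i)"
  proof - assume "i\<in>I" then interpret lattice "L i" by (rule lat) show "x \<in> carrier (L i) \<Longrightarrow> y \<in> carrier (L i) \<Longrightarrow> x \<sqinter>\<^bsub>L i\<^esub> y \<in> carrier (L i)" by (simp) qed
lemma jl: "i\<in>I \<Longrightarrow> x \<in> carrier (L i) \<Longrightarrow> y \<in> carrier (L i) \<Longrightarrow> x \<sqsubseteq>\<^bsub>L i\<^esub> x \<squnion>\<^bsub>L i\<^esub> y"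
  proof - assume "i\<in>I" then interpret lattice "L i" by (rule lat) show "x \<in> carrier (L i) \<Longrightarrow> y \<in> carrier (L i) \<Longrightarrow> x \<sqsubseteq>\<^bsub>L i\<^esub> x \<squnion>\<^bsub>L i\<^esub> y" by (rule join_left) qed
lemma jr: "i\<in>I \<Longrightarrow> x \<in> carrier (L i) \<Longrightarrow> y \<in> carrier (L i) \<Longrightarrow> y \<sqsubseteq>\<^bsub>L i\<^esub> x \<squnion>\<^bsub>L i\<^esub> y"
  proof - assume "i\<in>I" then interpret lattice "L i" by (rule lat) show "x \<in> carrier (L i) \<Longrightarrow> y \<in> carrier (L i) \<Longrightarrow> y \<sqsubseteq>\<^bsub>L i\<^esub> x \<squnion>\<^bsub>L i\<^esub> y" by (rule join_right) qed
lemma jle: "i\<in>I \<Longrightarrow> x \<sqsubseteq>\<^bsub>L i\<^esub> w \<Longrightarrow> y \<sqsubseteq>\<^bsub>L i\<^esub> w \<Longrightarrow> x \<in> carrier (L i) \<Longrightarrow> y \<in> carrier (L i) \<Longrightarrow> w \<in> carrier (L i) \<Longrightarrow> x \<squnion>\<^bsub>L i\<^esub> y \<sqsubseteq>\<^bsub>L i\<^esub> w"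
  proof - assume "i\<in>I" then interpret lattice "L i" by (rule lat) show "x \<sqsubseteq>\<^bsub>L i\<^esub> w \<Longrightarrow> y \<sqsubseteq>\<^bsub>L i\<^esub> w \<Longrightarrow> x \<in> carrier (L i) \<Longrightarrow> y \<in> carrier (L i) \<Longrightarrow> w \<in> carrier (L i) \<Longrightarrow> x \<squnion>\<^bsub>L i\<^esub> y \<sqsubseteq>\<^bsub>L i\<^esub> w" by (rule join_le) qed
lemma ml: "i\<in>I \<Longrightarrow> x \<in> carrier (L i) \<Longrightarrow> y \<in> carrier (L i) \<Longrightarrow> x \<sqinter>\<^bsub>L i\<^esub> y \<sqsubseteq>\<^bsub>L i\<^esub> x"
  proof - assume "i\<in>I" then interpret lattice "L i" by (rule lat) show "x \<in> carrier (L i) \<Longrightarrow> y \<in> carrier (L i) \<Longrightarrow> x \<sqinter>\<^bsub>L i\<^esub> y \<sqsubseteq>\<^bsub>L i\<^esub> x" by (rule meet_left) qed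
lemma mr: "i\<in>I \<Longrightarrow> x \<in> carrier (L i) \<Longrightarrow> y \<in> carrier (L i) \<Longrightarrow> x \<sqinter>\<^bsub>L i\<^esub> y \<sqsubseteq>\<^bsub>L i\<^esub> y"
  proof - assume "i\<in>I" then interpret lattice "L i" by (rule lat) show "x \<in> carrier (L i) \<Longrightarrow> y \<in> carrier (L i) \<Longrightarrow> x \<sqinter>\<^bsub>L i\<^esub> y \<sqsubseteq>\<^bsub>L i\<^esub> y" by (rule meet_right) qed
lemma mle: "i\<in>I \<Longrightarrow> w \<sqsubseteq>\<^bsub>L i\<^esub> x \<Longrightarrow> w \<sqsubseteq>\<^bsub>L i\<^esub> y \<Longrightarrow> x \<in> carrier (L i) \<Longrightarrow> y \<in> carrier (L i) \<Longrightarrow> w \<in> carrier (L i) \<Longrightarrow> w \<sqsubseteq>\<^bsub>L i\<^esub> x \<sqinter>\<^bsub>L i\<^esub> y"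
  proof - assume "i\<in>I" then interpret lattice "L i" by (rule lat) show "w \<sqsubseteq>\<^bsub>L i\<^esub> x \<Longrightarrow> w \<sqsubseteq>\<^bsub>L i\<^esub> y \<Longrightarrow> x \<in> carrier (L i) \<Longrightarrow> y \<in> carrier (L i) \<Longrightarrow> w \<in> carrier (L i) \<Longrightarrow> w \<sqsubseteq>\<^bsub>L i\<^esub> x \<sqinter>\<^bsub>L i\<^esub> y" by (rule meet_le) qed
lemma lrefl: "i\<in>I \<Longrightarrow> x \<in> carrier (L i) \<Longrightarrow> x \<sqsubseteq>\<^bsub>L i\<^esub> x"
  proof - assume "i\<in>I" then interpret lattice "L i" by (rule lat) show "x \<in> carrier (L i) \<Longrightarrow> x \<sqsubseteq>\<^bsub>L i\<^esub> x" by (simp) qed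
lemma ltrans: "i\<in>I \<Longrightarrow> x \<sqsubseteq>\<^bsub>L i\<^esub> y \<Longrightarrow> y \<sqsubseteq>\<^bsub>L i\<^esub> w \<Longrightarrow> x \<in> carrier (L i) \<Longrightarrow> y \<in> carrier (L i) \<Longrightarrow> w \<in> carrier (L i) \<Longrightarrow> x \<sqsubseteq>\<^bsub>L i\<^esub> w"
  proof - assume "i\<in>I" then interpret lattice "L i" by (rule lat) show "x \<sqsubseteq>\<^bsub>L i\<^esub> y \<Longrightarrow> y \<sqsubseteq>\<^bsub>L i\<^esub> w \<Longrightarrow> x \<in> carrier (L i) \<Longrightarrow> y \<in> carrier (L i) \<Longrightarrow> w \<in> carrier (L i) \<Longrightarrow> x \<sqsubseteq>\<^bsub>L i\<^esub> w" by (rule le_trans) qed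
lemma lanti: "i\<in>I \<Longrightarrow> x \<sqsubseteq>\<^bsub>L i\<^esub> y \<Longrightarrow> y \<sqsubseteq>\<^bsub>L i\<^esub> x \<Longrightarrow> x \<in> carrier (L i) \<Longrightarrow> y \<in> carrier (L i) \<Longrightarrow> x = y"
  proof - assume "i\<in>I" then interpret lattice "L i" by (rule lat) show "x \<sqsubseteq>\<^bsub>L i\<^esub> y \<Longrightarrow> y \<sqsubseteq>\<^bsub>L i\<^esub> x \<Longrightarrow> x \<in> carrier (L i) \<Longrightarrow> y \<in> carrier (L i) \<Longrightarrow> x = y" by (rule le_antisym) qed
lemma mb1: "i\<in>I \<Longrightarrow> x \<sqsubseteq>\<^bsub>L i\<^esub> w \<Longrightarrow> x \<in> carrier (L i) \<Longrightarrow> y \<in> carrier (L i) \<Longrightarrow> w \<in> carrier (L i) \<Longrightarrow> x \<sqinter>\<^bsub>L i\<^esub> y \<sqsubseteq>\<^bsub>L i\<^esub> w"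
  using ltrans[OF _ ml] mcl by blast
lemma mb2: "i\<in>I \<Longrightarrow> y \<sqsubseteq>\<^bsub>L i\<^esub> w \<Longrightarrow> x \<in> carrier (L i) \<Longrightarrow> y \<in> carrier (L i) \<Longrightarrow> w \<in> carrier (L i) \<Longrightarrow> x \<sqinter>\<^bsub>L i\<^esub> y \<sqsubseteq>\<^bsub>L i\<^esub> w"
  using ltrans[OF _ mr] mcl by blast
lemma ja1: "i\<in>I \<Longrightarrow> w \<sqsubseteq>\<^bsub>L i\<^esub> x \<Longrightarrow> x \<in> carrier (L i) \<Longrightarrow> y \<in> carrier (L i) \<Longrightarrow> w \<in> carrier (L i) \<Longrightarrow> w \<sqsubseteq>\<^bsub>L i\<^esub> x \<squnion>\<^bsub>L i\<^esub> y"
  using ltrans[of i w x "x \<squnion>\<^bsub>L i\<^esub> y"] jl[of i x y] jcl[of i x y] by blast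
lemma ja2: "i\<in>I \<Longrightarrow> w \<sqsubseteq>\<^bsub>L i\<^esub> y \<Longrightarrow> x \<in> carrier (L i) \<Longrightarrow> y \<in> carrier (L i) \<Longrightarrow> w \<in> carrier (L i) \<Longrightarrow> w \<sqsubseteq>\<^bsub>L i\<^esub> x \<squnion>\<^bsub>L i\<^esub> y"
  using ltrans[of i w y "x \<squnion>\<^bsub>L i\<^esub> y"] jr[of i x y] jcl[of i x y] by blast
lemma jmono: "i\<in>I \<Longrightarrow> x \<sqsubseteq>\<^bsub>L i\<^esub> x' \<Longrightarrow> y \<sqsubseteq>\<^bsub>L i\<^esub> y' \<Longrightarrow> x \<in> carrier (L i) \<Longrightarrow> y \<in> carrier (L i) \<Longrightarrow> x' \<in> carrier (L i) \<Longrightarrow> y' \<in> carrier (L i) \<Longrightarrow> x \<squnion>\<^bsub>L i\<^esub> y \<sqsubseteq>\<^bsub>L i\<^esub> x' \<squnion>\<^bsub>L i\<^esub> y'"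
  by (rule jle) (auto intro: ja1 ja2 jcl)
lemma mmono: "i\<in>I \<Longrightarrow> x \<sqsubseteq>\<^bsub>L i\<^esub> x' \<Longrightarrow> y \<sqsubseteq>\<^bsub>L i\<^esub> y' \<Longrightarrow> x \<in> carrier (L i) \<Longrightarrow> y \<in> carrier (L i) \<Longrightarrow> x' \<in> carrier (L i) \<Longrightarrow> y' \<in> carrier (L i) \<Longrightarrow> x \<sqinter>\<^bsub>L i\<^esub> y \<sqsubseteq>\<^bsub>L i\<^esub> x' \<sqinter>\<^bsub>L i\<^esub> y'"
  by (rule mle) (auto intro: mb1 mb2 mcl)

lemma join_eq: "i\<in>I \<Longrightarrow> x \<sqsubseteq>\<^bsub>L i\<^esub> y \<Longrightarrow> x \<in> carrier (L i) \<Longrightarrow> y \<in> carrier (L i) \<Longrightarrow> x \<squnion>\<^bsub>L i\<^esub> y = y"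
  by (meson jcl jle jr lanti lrefl)


lemma ole_refl: "i\<in>I \<Longrightarrow> set_option x \<subseteq> carrier (L i) \<Longrightarrow> ole (L i) x x"
  by (cases x) (auto intro: lrefl)

lemma ole_trans: "i\<in>I \<Longrightarrow> ole (L i) x y \<Longrightarrow> ole (L i) y w \<Longrightarrow> set_option x \<subseteq> carrier (L i)
  \<Longrightarrow> set_option y \<subseteq> carrier (L i) \<Longrightarrow> set_option w \<subseteq> carrier (L i) \<Longrightarrow> ole (L i) x w"
  by (cases x; cases y; cases w; simp) (meson ltrans)

lemma ojoin_car: "i\<in>I \<Longrightarrow> set_option x \<subseteq> carrier (L i) \<Longrightarrow> set_option y \<subseteq> carrier (L i) \<Longrightarrow> set_option (ojoin (L i) x y) \<subseteq> carrier (L i)"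
  by (cases x; cases y) (auto intro: jcl)
lemma omeet_car: "i\<in>I \<Longrightarrow> set_option x \<subseteq> carrier (L i) \<Longrightarrow> set_option y \<subseteq> carrier (L i) \<Longrightarrow> set_option (omeet (L i) x y) \<subseteq> carrier (L i)"
  by (cases x; cases y) (auto intro: mcl)

lemma ojoin_le: "i\<in>I \<Longrightarrow> ole (L i) x w \<Longrightarrow> ole (L i) y w \<Longrightarrow> set_option x \<subseteq> carrier (L i)
  \<Longrightarrow> set_option y \<subseteq> carrier (L i) \<Longrightarrow> set_option w \<subseteq> carrier (L i) \<Longrightarrow> ole (L i) (ojoin (L i) x y) w"
  by (cases x; cases y; cases w; simp) (meson jle)
lemma ojoin_ub1: "i\<in>I \<Longrightarrow> set_option x \<subseteq> carrier (L i) \<Longrightarrow> set_option y \<subseteq> carrier (L i) \<Longrightarrow> ole (L i) x (ojoin (L i) x y)"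
  by (cases x; cases y) (auto intro: jl)
lemma ojoin_ub2: "i\<in>I \<Longrightarrow> set_option x \<subseteq> carrier (L i) \<Longrightarrow> set_option y \<subseteq> carrier (L i) \<Longrightarrow> ole (L i) y (ojoin (L i) x y)"
  by (cases x; cases y) (auto intro: jr)
lemma omeet_glb: "i\<in>I \<Longrightarrow> ole (L i) w x \<Longrightarrow> ole (L i) w y \<Longrightarrow> set_option x \<subseteq> carrier (L i)
  \<Longrightarrow> set_option y \<subseteq> carrier (L i) \<Longrightarrow> set_option w \<subseteq> carrier (L i) \<Longrightarrow> ole (L i) w (omeet (L i) x y)"
  by (cases x; cases y; cases w; simp) (meson mle)
lemma omeet_lb1: "i\<in>I \<Longrightarrow> set_option x \<subseteq> carrier (L i) \<Longrightarrow> set_option y \<subseteq> carrier (L i) \<Longrightarrow> ole (L i) (omeet (L i) x y) x"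
  by (cases x; cases y) (auto intro: ml lrefl)
lemma omeet_lb2: "i\<in>I \<Longrightarrow> set_option x \<subseteq> carrier (L i) \<Longrightarrow> set_option y \<subseteq> carrier (L i) \<Longrightarrow> ole (L i) (omeet (L i) x y) y"
  by (cases x; cases y) (auto intro: mr lrefl)
lemma ole_None: "ole M None y \<longleftrightarrow> y = None"
  by (cases y) auto

primrec Uf :: "'a lterm \<Rightarrow> 'i \<Rightarrow> 'a option" where
  "Uf (LVar x) = (\<lambda>i. if x \<in> carrier (L i) then Some x else None)"
| "Uf (LJoin p q) = (\<lambda>i. ojoin (L i) (Uf p i) (Uf q i))"
| "Uf (LMeet p q) = (if \<exists>k\<in>I. ole (L k) (omeet (L k) (Uf p k) (Uf q k)) (Some z)
      then (\<lambda>i. Some z) else (\<lambda>i. omeet (L i) (Uf p i) (Uf q i)))"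

primrec Df :: "'a lterm \<Rightarrow> 'i \<Rightarrow> 'a" where
  "Df (LVar x) = (\<lambda>i. if x \<in> carrier (L i) then x else z)"
| "Df (LJoin p q) = (\<lambda>i. Df p i \<squnion>\<^bsub>L i\<^esub> Df q i)"
| "Df (LMeet p q) = (\<lambda>i. Df p i \<sqinter>\<^bsub>L i\<^esub> Df q i)"

lemma Ucar: "i\<in>I \<Longrightarrow> set_option (Uf p i) \<subseteq> carrier (L i)"
proof (induction p)
  case (LVar x) then show ?case by auto
next
  case (LJoin p1 p2) then show ?case by (simp add: ojoin_car)
next
  case (LMeet p1 p2) then show ?case using zin by (auto simp: omeet_car)
qed

lemma Dcar: "i\<in>I \<Longrightarrow> Df p i \<in> carrier (L i)"
  by (induction p) (auto simp: zin jcl mcl)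

lemma Uge: "i\<in>I \<Longrightarrow> ole (L i) (Some z) (Uf p i)"
proof (induction p)
  case (LVar x) then show ?case by (auto simp: zle)
next
  case (LJoin p1 p2)
  have "ole (L i) (Uf p1 i) (ojoin (L i) (Uf p1 i) (Uf p2 i))" using ojoin_ub1 Ucar LJoin.prems by blast
  then show ?case using ole_trans[OF LJoin.prems LJoin.IH(1)[OF LJoin.prems]] Ucar ojoin_car zin LJoin.prems by simp
next
  case (LMeet p1 p2) then show ?case using zin by (auto simp: omeet_glb Ucar lrefl)
qed

lemma Dge: "i\<in>I \<Longrightarrow> z \<sqsubseteq>\<^bsub>L i\<^esub> Df p i"
  using zle Dcar by blast

lemma ole_z_trans: "i\<in>I \<Longrightarrow> ole (L i) x y \<Longrightarrow> ole (L i) y (Some z) \<Longrightarrow> set_option x \<subseteq> carrier (L i)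
  \<Longrightarrow> set_option y \<subseteq> carrier (L i) \<Longrightarrow> ole (L i) x (Some z)"
  using ole_trans zin by auto

lemma ZL: "k\<in>I \<Longrightarrow> k'\<in>I \<Longrightarrow> ole (L k) (Uf p k) (Some z) \<Longrightarrow> ole (L k') (Uf p k') (Some z)"
proof (induction p)
  case (LVar x)
  then have xk: "x \<in> carrier (L k)" "x \<sqsubseteq>\<^bsub>L k\<^esub> z" by (auto split: if_splits)
  have "x = z" using lanti[OF LVar.prems(1) xk(2) zle[OF LVar.prems(1) xk(1)] xk(1) zin[OF LVar.prems(1)]] .
  have "Uf (LVar x) k' = Some z" using \<open>x = z\<close> zin[OF LVar.prems(2)] by simp
  then show ?case using lrefl[OF LVar.prems(2) zin[OF LVar.prems(2)]] by (simp only: ole.simps)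
next
  case (LJoin p1 p2)
  have J: "ole (L k) (ojoin (L k) (Uf p1 k) (Uf p2 k)) (Some z)" using LJoin.prems(3) by simp
  have sz: "set_option (Some z) \<subseteq> carrier (L k)" "set_option (Some z) \<subseteq> carrier (L k')"
    using zin LJoin.prems by auto
  have "ole (L k) (Uf p1 k) (Some z)"
    using ole_trans[OF LJoin.prems(1) ojoin_ub1[OF LJoin.prems(1) Ucar Ucar] J Ucar ojoin_car[OF LJoin.prems(1) Ucar Ucar] sz(1)] LJoin.prems(1) by (simp add: Ucar)
  moreover have "ole (L k) (Uf p2 k) (Some z)"
    using ole_trans[OF LJoin.prems(1) ojoin_ub2[OF LJoin.prems(1) Ucar Ucar] J Ucar ojoin_car[OF LJoin.prems(1) Ucar Ucar] sz(1)] LJoin.prems(1) by (simp add: Ucar)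
  ultimately have "ole (L k') (Uf p1 k') (Some z)" "ole (L k') (Uf p2 k') (Some z)"
    using LJoin.IH LJoin.prems by blast+
  then have "ole (L k') (ojoin (L k') (Uf p1 k') (Uf p2 k')) (Some z)"
    using ojoin_le[OF LJoin.prems(2) _ _ Ucar[OF LJoin.prems(2)] Ucar[OF LJoin.prems(2)] sz(2)] by blast
  then show ?case by simp
next
  case (LMeet p1 p2)
  show ?case
  proof (cases "\<exists>k\<in>I. ole (L k) (omeet (L k) (Uf p1 k) (Uf p2 k)) (Some z)")
    case True
    then have "Uf (LMeet p1 p2) k' = Some z" by simp
    then show ?thesis using lrefl[OF LMeet.prems(2) zin[OF LMeet.prems(2)]] by (simp only: ole.simps)
  next
    case False
    then have "Uf (LMeet p1 p2) k = omeet (L k) (Uf p1 k) (Uf p2 k)" by simp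
    then show ?thesis using False LMeet.prems by auto
  qed
qed

lemma CDU: "(\<forall>i\<in>I. ole (L i) (Some (Df q i)) (Uf q i)) \<and>
  (\<forall>i\<in>I. \<forall>j\<in>I. i \<noteq> j \<longrightarrow> \<not> Df q j \<sqsubseteq>\<^bsub>L j\<^esub> z \<longrightarrow> Uf q i = None)"
proof (induction q)
  case (LVar x)
  have "Uf (LVar x) i = None" if "i\<in>I" "j\<in>I" "i\<noteq>j" "\<not> Df (LVar x) j \<sqsubseteq>\<^bsub>L j\<^esub> z" for i j
  proof -
    have xj: "x \<in> carrier (L j)" using that lrefl zin by (auto split: if_splits)
    have "x \<noteq> z" using that lrefl zin by auto
    then have "x \<notin> carrier (L i)" using disj[OF that(1,2,3)] xj by auto
    then show ?thesis by simp
  qed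
  then show ?case using lrefl by auto
next
  case (LJoin p1 p2)
  have A: "ole (L i) (Some (Df (LJoin p1 p2) i)) (Uf (LJoin p1 p2) i)" if "i\<in>I" for i
  proof (cases "Uf p1 i"; cases "Uf p2 i")
    fix c1 c2 assume c: "Uf p1 i = Some c1" "Uf p2 i = Some c2"
    have "Df p1 i \<sqsubseteq>\<^bsub>L i\<^esub> c1" "Df p2 i \<sqsubseteq>\<^bsub>L i\<^esub> c2" using LJoin.IH that c by (metis ole.simps(3))+
    moreover have "c1 \<in> carrier (L i)" "c2 \<in> carrier (L i)" using Ucar[OF that] c by fastforce+
    ultimately show ?thesis using c that jmono Dcar by simp
  qed auto
  have B: "Uf (LJoin p1 p2) i = None" if "i\<in>I" "j\<in>I" "i\<noteq>j" "\<not> Df (LJoin p1 p2) j \<sqsubseteq>\<^bsub>L j\<^esub> z" for i j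
  proof -
    have "\<not> Df p1 j \<sqsubseteq>\<^bsub>L j\<^esub> z \<or> \<not> Df p2 j \<sqsubseteq>\<^bsub>L j\<^esub> z"
      using that jle Dcar zin by auto
    then have "Uf p1 i = None \<or> Uf p2 i = None" using LJoin.IH that by meson
    then show ?thesis by auto
  qed
  show ?case using A B by blast
next
  case (LMeet p1 p2)
  define w where "w k = omeet (L k) (Uf p1 k) (Uf p2 k)" for k
  have wD: "ole (L k) (Some (Df p1 k \<sqinter>\<^bsub>L k\<^esub> Df p2 k)) (w k)" if "k\<in>I" for k
  proof -
    have "ole (L k) (Some (Df p1 k \<sqinter>\<^bsub>L k\<^esub> Df p2 k)) (Uf p1 k)"
      using ole_trans[OF that _ _ _ _ Ucar, of "Some (Df p1 k \<sqinter>\<^bsub>L k\<^esub> Df p2 k)" "Some (Df p1 k)"]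
        LMeet.IH that Dcar ml mcl by simp
    moreover have "ole (L k) (Some (Df p1 k \<sqinter>\<^bsub>L k\<^esub> Df p2 k)) (Uf p2 k)"
      using ole_trans[OF that _ _ _ _ Ucar, of "Some (Df p1 k \<sqinter>\<^bsub>L k\<^esub> Df p2 k)" "Some (Df p2 k)"]
        LMeet.IH that Dcar mr mcl by simp
    ultimately show ?thesis unfolding w_def using omeet_glb that Ucar Dcar mcl by simp
  qed
  have wcar: "set_option (w k) \<subseteq> carrier (L k)" if "k\<in>I" for k
    unfolding w_def using omeet_car Ucar that by simp
  have C: "Uf (LMeet p1 p2) i = None" if "i\<in>I" "j\<in>I" "i\<noteq>j" "\<not> Df (LMeet p1 p2) j \<sqsubseteq>\<^bsub>L j\<^esub> z" for i j
  proof -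
    have n: "\<not> Df p1 j \<sqsubseteq>\<^bsub>L j\<^esub> z" "\<not> Df p2 j \<sqsubseteq>\<^bsub>L j\<^esub> z"
      using that mb1 mb2 Dcar zin by auto
    have nc: "\<not> ole (L k) (w k) (Some z)" if "k\<in>I" for k
    proof (cases "k = j")
      case True
      show ?thesis
      proof
        assume "ole (L k) (w k) (Some z)"
        then have "ole (L k) (Some (Df p1 k \<sqinter>\<^bsub>L k\<^esub> Df p2 k)) (Some z)"
          using ole_trans[OF that wD[OF that] \<open>ole (L k) (w k) (Some z)\<close> _ wcar[OF that]] zin[OF that] Dcar[OF that] mcl[OF that] by simp
        then show False using \<open>\<not> Df (LMeet p1 p2) j \<sqsubseteq>\<^bsub>L j\<^esub> z\<close> True by simp
      qed
    next
      case False
      then have "Uf p1 k = None" "Uf p2 k = None" using LMeet.IH n that \<open>j\<in>I\<close> by blast+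
      then show ?thesis unfolding w_def by simp
    qed
    have "Uf p1 i = None" "Uf p2 i = None" using LMeet.IH n that by blast+
    then show ?thesis using nc unfolding w_def by auto
  qed
  have D: "ole (L i) (Some (Df (LMeet p1 p2) i)) (Uf (LMeet p1 p2) i)" if "i\<in>I" for i
  proof (cases "\<exists>k\<in>I. ole (L k) (w k) (Some z)")
    case True
    then obtain k where k: "k\<in>I" "ole (L k) (w k) (Some z)" by blast
    have "Df p1 i \<sqinter>\<^bsub>L i\<^esub> Df p2 i \<sqsubseteq>\<^bsub>L i\<^esub> z"
    proof (cases "k = i")
      case True
      then show ?thesis using ole_trans[OF that wD[OF that], of "Some z"] k wcar[OF that] zin[OF that] Dcar[OF that] mcl[OF that] by simp
    next
      case False
      show ?thesis
      proof (rule ccontr)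
        assume a: "\<not> ?thesis"
        have n: "\<not> Df p1 i \<sqsubseteq>\<^bsub>L i\<^esub> z" "\<not> Df p2 i \<sqsubseteq>\<^bsub>L i\<^esub> z"
          using a mb1 mb2 Dcar zin that by auto
        then have "Uf p1 k = None" "Uf p2 k = None" using LMeet.IH False k(1) that by blast+
        then show False using k unfolding w_def by simp
      qed
    qed
    then show ?thesis using True unfolding w_def by simp
  next
    case False
    then show ?thesis using wD[OF that] unfolding w_def by simp
  qed
  have "\<forall>i\<in>I. ole (L i) (Some (Df (LMeet p1 p2) i)) (Uf (LMeet p1 p2) i)" using D by (intro ballI)
  moreover have "\<forall>i\<in>I. \<forall>j\<in>I. i \<noteq> j \<longrightarrow> \<not> Df (LMeet p1 p2) j \<sqsubseteq>\<^bsub>L j\<^esub> z \<longrightarrow> Uf (LMeet p1 p2) i = None"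
    using C by (intro ballI impI)
  ultimately show ?case by (rule conjI)
qed

lemma DU: "i\<in>I \<Longrightarrow> ole (L i) (Some (Df q i)) (Uf q i)"
  using CDU by blast
lemma CC: "i\<in>I \<Longrightarrow> j\<in>I \<Longrightarrow> i \<noteq> j \<Longrightarrow> \<not> Df q j \<sqsubseteq>\<^bsub>L j\<^esub> z \<Longrightarrow> Uf q i = None"
  using CDU by blast

end

context cpx begin

inductive ple :: "'a lterm \<Rightarrow> 'a lterm \<Rightarrow> bool" where
  W0: "i \<in> I \<Longrightarrow> ole (L i) (Uf p i) (Some (Df q i)) \<Longrightarrow> ple p q"
| W1: "ple p0 q \<Longrightarrow> ple p1 q \<Longrightarrow> ple (LJoin p0 p1) q"
| W2a: "ple p0 q \<Longrightarrow> ple (LMeet p0 p1) q"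
| W2b: "ple p1 q \<Longrightarrow> ple (LMeet p0 p1) q"
| W3: "ple p q0 \<Longrightarrow> ple p q1 \<Longrightarrow> ple p (LMeet q0 q1)"
| W4a: "ple p q0 \<Longrightarrow> ple p (LJoin q0 q1)"
| W4b: "ple p q1 \<Longrightarrow> ple p (LJoin q0 q1)"

lemma szc: "i\<in>I \<Longrightarrow> set_option (Some z) \<subseteq> carrier (L i)" using zin by simp
lemma sDc: "i\<in>I \<Longrightarrow> set_option (Some (Df q i)) \<subseteq> carrier (L i)" using Dcar by simp

lemma Umeet_le1: "i\<in>I \<Longrightarrow> ole (L i) (Uf (LMeet p0 p1) i) (Uf p0 i)"
proof (cases "\<exists>k\<in>I. ole (L k) (omeet (L k) (Uf p0 k) (Uf p1 k)) (Some z)")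
  case True
  then have "Uf (LMeet p0 p1) i = Some z" by simp
  then show "i\<in>I \<Longrightarrow> ?thesis" using Uge by simp
next
  case False
  then have "Uf (LMeet p0 p1) i = omeet (L i) (Uf p0 i) (Uf p1 i)" by simp
  then show "i\<in>I \<Longrightarrow> ?thesis" using omeet_lb1 Ucar by simp
qed

lemma Umeet_le2: "i\<in>I \<Longrightarrow> ole (L i) (Uf (LMeet p0 p1) i) (Uf p1 i)"
proof (cases "\<exists>k\<in>I. ole (L k) (omeet (L k) (Uf p0 k) (Uf p1 k)) (Some z)")
  case True
  then have "Uf (LMeet p0 p1) i = Some z" by simp
  then show "i\<in>I \<Longrightarrow> ?thesis" using Uge by simp
next
  case False
  then have "Uf (LMeet p0 p1) i = omeet (L i) (Uf p0 i) (Uf p1 i)" by simp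
  then show "i\<in>I \<Longrightarrow> ?thesis" using omeet_lb2 Ucar by simp
qed

lemma M: "ple p q \<Longrightarrow> \<forall>i\<in>I. ole (L i) (Uf p i) (Uf q i) \<and> Df p i \<sqsubseteq>\<^bsub>L i\<^esub> Df q i"
proof (induction rule: ple.induct)
  case (W0 j p q)
  show ?case
  proof
    fix i assume i: "i\<in>I"
    show "ole (L i) (Uf p i) (Uf q i) \<and> Df p i \<sqsubseteq>\<^bsub>L i\<^esub> Df q i"
    proof (cases "ole (L j) (Uf p j) (Some z)")
      case True
      have pz: "ole (L i) (Uf p i) (Some z)" using ZL[OF W0.hyps(1) i True] .
      have "ole (L i) (Uf p i) (Uf q i)" using ole_trans[OF i pz Uge[OF i] Ucar[OF i] szc[OF i] Ucar[OF i]] .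
      moreover have "ole (L i) (Some (Df p i)) (Some z)" using ole_trans[OF i DU[OF i] pz sDc[OF i] Ucar[OF i] szc[OF i]] .
      then have "Df p i \<sqsubseteq>\<^bsub>L i\<^esub> Df q i" using ltrans[OF i _ Dge[OF i] Dcar[OF i] zin[OF i] Dcar[OF i]] by simp
      ultimately show ?thesis by blast
    next
      case False
      have nD: "\<not> Df q j \<sqsubseteq>\<^bsub>L j\<^esub> z"
      proof
        assume "Df q j \<sqsubseteq>\<^bsub>L j\<^esub> z"
        then have "ole (L j) (Some (Df q j)) (Some z)" by simp
        then show False using False ole_trans[OF W0.hyps(1) W0.hyps(2) _ Ucar[OF W0.hyps(1)] sDc[OF W0.hyps(1)] szc[OF W0.hyps(1)]] by blast
      qed
      show ?thesis
      proof (cases "i = j")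
        case True
        have "ole (L i) (Uf p i) (Uf q i)"
          using ole_trans[OF W0.hyps(1) W0.hyps(2) DU[OF W0.hyps(1)] Ucar[OF W0.hyps(1)] sDc[OF W0.hyps(1)] Ucar[OF W0.hyps(1)]] True by simp
        moreover have "ole (L i) (Some (Df p i)) (Some (Df q i))"
          using ole_trans[OF W0.hyps(1) DU[OF W0.hyps(1)] W0.hyps(2) sDc[OF W0.hyps(1)] Ucar[OF W0.hyps(1)] sDc[OF W0.hyps(1)]] True by simp
        ultimately show ?thesis by simp
      next
        case False
        have "Uf q i = None" using CC[OF i W0.hyps(1) False nD] .
        moreover have "Df p i \<sqsubseteq>\<^bsub>L i\<^esub> Df q i"
        proof (cases "Df p i \<sqsubseteq>\<^bsub>L i\<^esub> z")
          case True
          then show ?thesis using ltrans[OF i True Dge[OF i] Dcar[OF i] zin[OF i] Dcar[OF i]] by simp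
        next
          case nz: False
          have "Uf p j = None" using CC[OF W0.hyps(1) i _ nz] False by simp
          then show ?thesis using W0.hyps(2) by simp
        qed
        ultimately show ?thesis by simp
      qed
    qed
  qed
next
  case (W1 p0 q p1)
  show ?case
  proof
    fix i assume i: "i\<in>I"
    have "ole (L i) (ojoin (L i) (Uf p0 i) (Uf p1 i)) (Uf q i)"
      using ojoin_le[OF i _ _ Ucar[OF i] Ucar[OF i] Ucar[OF i]] W1.IH i by blast
    moreover have "Df p0 i \<squnion>\<^bsub>L i\<^esub> Df p1 i \<sqsubseteq>\<^bsub>L i\<^esub> Df q i"
      using jle[OF i _ _ Dcar[OF i] Dcar[OF i] Dcar[OF i]] W1.IH i by blast
    ultimately show "ole (L i) (Uf (LJoin p0 p1) i) (Uf q i) \<and> Df (LJoin p0 p1) i \<sqsubseteq>\<^bsub>L i\<^esub> Df q i" by simp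
  qed
next
  case (W2a p0 q p1)
  show ?case
  proof
    fix i assume i: "i\<in>I"
    have "ole (L i) (Uf (LMeet p0 p1) i) (Uf q i)"
      using ole_trans[OF i Umeet_le1[OF i] _ Ucar[OF i] Ucar[OF i] Ucar[OF i]] W2a.IH i by blast
    moreover have "Df p0 i \<sqinter>\<^bsub>L i\<^esub> Df p1 i \<sqsubseteq>\<^bsub>L i\<^esub> Df q i"
      using mb1[OF i _ Dcar[OF i] Dcar[OF i] Dcar[OF i]] W2a.IH i by blast
    ultimately show "ole (L i) (Uf (LMeet p0 p1) i) (Uf q i) \<and> Df (LMeet p0 p1) i \<sqsubseteq>\<^bsub>L i\<^esub> Df q i" by simp
  qed
next
  case (W2b p1 q p0)
  show ?case
  proof
    fix i assume i: "i\<in>I"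
    have "ole (L i) (Uf (LMeet p0 p1) i) (Uf q i)"
      using ole_trans[OF i Umeet_le2[OF i] _ Ucar[OF i] Ucar[OF i] Ucar[OF i]] W2b.IH i by blast
    moreover have "Df p0 i \<sqinter>\<^bsub>L i\<^esub> Df p1 i \<sqsubseteq>\<^bsub>L i\<^esub> Df q i"
      using mb2[OF i _ Dcar[OF i] Dcar[OF i] Dcar[OF i]] W2b.IH i by blast
    ultimately show "ole (L i) (Uf (LMeet p0 p1) i) (Uf q i) \<and> Df (LMeet p0 p1) i \<sqsubseteq>\<^bsub>L i\<^esub> Df q i" by simp
  qed
next
  case (W3 p q0 q1)
  show ?case
  proof
    fix i assume i: "i\<in>I"
    have U: "ole (L i) (Uf p i) (Uf (LMeet q0 q1) i)"
    proof (cases "\<exists>k\<in>I. ole (L k) (omeet (L k) (Uf q0 k) (Uf q1 k)) (Some z)")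
      case True
      then obtain k where k: "k\<in>I" "ole (L k) (omeet (L k) (Uf q0 k) (Uf q1 k)) (Some z)" by blast
      have "ole (L k) (Uf p k) (omeet (L k) (Uf q0 k) (Uf q1 k))"
        using omeet_glb[OF k(1) _ _ Ucar[OF k(1)] Ucar[OF k(1)] Ucar[OF k(1)]] W3.IH k(1) by blast
      then have "ole (L k) (Uf p k) (Some z)"
        using ole_trans[OF k(1) _ k(2) Ucar[OF k(1)] omeet_car[OF k(1) Ucar[OF k(1)] Ucar[OF k(1)]] szc[OF k(1)]] by blast
      then have "ole (L i) (Uf p i) (Some z)" using ZL[OF k(1) i] by blast
      moreover have "Uf (LMeet q0 q1) i = Some z" using True by simp
      ultimately show ?thesis by simp
    next
      case False
      then have "Uf (LMeet q0 q1) i = omeet (L i) (Uf q0 i) (Uf q1 i)" by simp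
      then show ?thesis using omeet_glb[OF i _ _ Ucar[OF i] Ucar[OF i] Ucar[OF i]] W3.IH i by simp
    qed
    moreover have "Df p i \<sqsubseteq>\<^bsub>L i\<^esub> Df q0 i \<sqinter>\<^bsub>L i\<^esub> Df q1 i"
      using mle[OF i _ _ Dcar[OF i] Dcar[OF i] Dcar[OF i]] W3.IH i by blast
    ultimately show "ole (L i) (Uf p i) (Uf (LMeet q0 q1) i) \<and> Df p i \<sqsubseteq>\<^bsub>L i\<^esub> Df (LMeet q0 q1) i" by simp
  qed
next
  case (W4a p q0 q1)
  show ?case
  proof
    fix i assume i: "i\<in>I"
    have "ole (L i) (Uf p i) (ojoin (L i) (Uf q0 i) (Uf q1 i))"
      using ole_trans[OF i _ ojoin_ub1[OF i Ucar[OF i] Ucar[OF i]] Ucar[OF i] Ucar[OF i] ojoin_car[OF i Ucar[OF i] Ucar[OF i]]] W4a.IH i by blast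
    moreover have "Df p i \<sqsubseteq>\<^bsub>L i\<^esub> Df q0 i \<squnion>\<^bsub>L i\<^esub> Df q1 i"
      using ja1[OF i _ Dcar[OF i] Dcar[OF i] Dcar[OF i]] W4a.IH i by blast
    ultimately show "ole (L i) (Uf p i) (Uf (LJoin q0 q1) i) \<and> Df p i \<sqsubseteq>\<^bsub>L i\<^esub> Df (LJoin q0 q1) i" by simp
  qed
next
  case (W4b p q1 q0)
  show ?case
  proof
    fix i assume i: "i\<in>I"
    have "ole (L i) (Uf p i) (ojoin (L i) (Uf q0 i) (Uf q1 i))"
      using ole_trans[OF i _ ojoin_ub2[OF i Ucar[OF i] Ucar[OF i]] Ucar[OF i] Ucar[OF i] ojoin_car[OF i Ucar[OF i] Ucar[OF i]]] W4b.IH i by blast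
    moreover have "Df p i \<sqsubseteq>\<^bsub>L i\<^esub> Df q0 i \<squnion>\<^bsub>L i\<^esub> Df q1 i"
      using ja2[OF i _ Dcar[OF i] Dcar[OF i] Dcar[OF i]] W4b.IH i by blast
    ultimately show "ole (L i) (Uf p i) (Uf (LJoin q0 q1) i) \<and> Df p i \<sqsubseteq>\<^bsub>L i\<^esub> Df (LJoin q0 q1) i" by simp
  qed
qed

end

context cpx begin

lemma MU: "ple p q \<Longrightarrow> i\<in>I \<Longrightarrow> ole (L i) (Uf p i) (Uf q i)" using M by blast
lemma MD: "ple p q \<Longrightarrow> i\<in>I \<Longrightarrow> Df p i \<sqsubseteq>\<^bsub>L i\<^esub> Df q i" using M by blast

lemma ple_trans: "ple p q \<Longrightarrow> ple q r \<Longrightarrow> ple p r"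
proof (induction p q arbitrary: r rule: ple.induct)
  case (W0 i p q r)
  have "ole (L i) (Uf p i) (Some (Df r i))"
    using ole_trans[OF W0.hyps(1) W0.hyps(2) _ Ucar[OF W0.hyps(1)] sDc[OF W0.hyps(1)] sDc[OF W0.hyps(1)]]
      MD[OF W0.prems W0.hyps(1)] by simp
  then show ?case using W0.hyps(1) ple.W0 by blast
next
  case (W1 p0 q p1 r) then show ?case by (blast intro: ple.W1)
next
  case (W2a p0 q p1 r) then show ?case by (blast intro: ple.W2a)
next
  case (W2b p1 q p0 r) then show ?case by (blast intro: ple.W2b)
next
  case (W3 p q0 q1 r)
  have "ple Q r \<Longrightarrow> Q = LMeet q0 q1 \<Longrightarrow> ple p r" for Q
  proof (induction Q r rule: ple.induct)
    case (W0 j Q r)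
    have pq: "ple p (LMeet q0 q1)" using W3.hyps by (rule ple.W3)
    have "ole (L j) (Uf p j) (Some (Df r j))"
      using ole_trans[OF W0.hyps(1) MU[OF pq W0.hyps(1)] _ Ucar[OF W0.hyps(1)] Ucar[OF W0.hyps(1)] sDc[OF W0.hyps(1)]]
        W0.hyps(2) W0.prems by simp
    then show ?case using W0.hyps(1) ple.W0 by blast
  next
    case (W1 p0 q p1) then show ?case by simp
  next
    case (W2a p0 q p1) then show ?case using W3.IH by simp
  next
    case (W2b p1 q p0) then show ?case using W3.IH by simp
  next
    case (W3 p q0 q1) then show ?case by (blast intro: ple.W3)
  next
    case (W4a p q0 q1) then show ?case by (blast intro: ple.W4a)
  next
    case (W4b p q1 q0) then show ?case by (blast intro: ple.W4b)
  qed
  then show ?case using W3.prems by blast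
next
  case (W4a p q0 q1 r)
  have "ple Q r \<Longrightarrow> Q = LJoin q0 q1 \<Longrightarrow> ple p r" for Q
  proof (induction Q r rule: ple.induct)
    case (W0 j Q r)
    have pq: "ple p (LJoin q0 q1)" using W4a.hyps by (rule ple.W4a)
    have "ole (L j) (Uf p j) (Some (Df r j))"
      using ole_trans[OF W0.hyps(1) MU[OF pq W0.hyps(1)] _ Ucar[OF W0.hyps(1)] Ucar[OF W0.hyps(1)] sDc[OF W0.hyps(1)]]
        W0.hyps(2) W0.prems by simp
    then show ?case using W0.hyps(1) ple.W0 by blast
  next
    case (W1 p0 q p1) then show ?case using W4a.IH by simp
  next
    case (W2a p0 q p1) then show ?case by simp
  next
    case (W2b p1 q p0) then show ?case by simp
  next
    case (W3 p q0 q1) then show ?case by (blast intro: ple.W3)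
  next
    case (W4a p q0 q1) then show ?case by (blast intro: ple.W4a)
  next
    case (W4b p q1 q0) then show ?case by (blast intro: ple.W4b)
  qed
  then show ?case using W4a.prems by blast
next
  case (W4b p q1 q0 r)
  have "ple Q r \<Longrightarrow> Q = LJoin q0 q1 \<Longrightarrow> ple p r" for Q
  proof (induction Q r rule: ple.induct)
    case (W0 j Q r)
    have pq: "ple p (LJoin q0 q1)" using W4b.hyps by (rule ple.W4b)
    have "ole (L j) (Uf p j) (Some (Df r j))"
      using ole_trans[OF W0.hyps(1) MU[OF pq W0.hyps(1)] _ Ucar[OF W0.hyps(1)] Ucar[OF W0.hyps(1)] sDc[OF W0.hyps(1)]]
        W0.hyps(2) W0.prems by simp
    then show ?case using W0.hyps(1) ple.W0 by blast
  next
    case (W1 p0 q p1) then show ?case using W4b.IH by simp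
  next
    case (W2a p0 q p1) then show ?case by simp
  next
    case (W2b p1 q p0) then show ?case by simp
  next
    case (W3 p q0 q1) then show ?case by (blast intro: ple.W3)
  next
    case (W4a p q0 q1) then show ?case by (blast intro: ple.W4a)
  next
    case (W4b p q1 q0) then show ?case by (blast intro: ple.W4b)
  qed
  then show ?case using W4b.prems by blast
qed

abbreviation "G \<equiv> cp_gens L I z"

lemma gens_cases: "x \<in> G \<Longrightarrow> \<exists>i\<in>I. x \<in> carrier (L i)"
  unfolding cp_gens_def using Ine zin by auto

lemma car_G: "i\<in>I \<Longrightarrow> x \<in> carrier (L i) \<Longrightarrow> x \<in> G"
  unfolding cp_gens_def by auto

lemma ple_var: "i\<in>I \<Longrightarrow> x \<in> carrier (L i) \<Longrightarrow> y \<in> carrier (L i) \<Longrightarrow> x \<sqsubseteq>\<^bsub>L i\<^esub> y \<Longrightarrow> ple (LVar x) (LVar y)"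
  by (rule ple.W0[of i]) auto

lemma ple_refl: "set_lterm p \<subseteq> G \<Longrightarrow> ple p p"
proof (induction p)
  case (LVar x)
  then obtain i where "i\<in>I" "x \<in> carrier (L i)" using gens_cases by auto
  then show ?case using ple_var lrefl by blast
next
  case (LJoin p1 p2) then show ?case by (auto intro: ple.intros)
next
  case (LMeet p1 p2) then show ?case by (auto intro: ple.intros)
qed

lemma cp_ple: "cp_le L I z s t \<Longrightarrow> ple s t"
proof (induction rule: cp_le.induct)
  case (refl t) then show ?case by (rule ple_refl)
next
  case (trans s t u) then show ?case using ple_trans by blast
next
  case (join_upper1 s t) then show ?case by (auto intro: ple.intros ple_refl)
next
  case (join_upper2 s t) then show ?case by (auto intro: ple.intros ple_refl)
next
  case (join_least s u t) then show ?case by (auto intro: ple.intros)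
next
  case (meet_lower1 s t) then show ?case by (auto intro: ple.intros ple_refl)
next
  case (meet_lower2 s t) then show ?case by (auto intro: ple.intros ple_refl)
next
  case (meet_greatest u s t) then show ?case by (auto intro: ple.intros)
next
  case (gen_join1 i x y)
  show ?case
    by (rule ple.W1; rule ple_var[OF gen_join1.hyps(1)]) (auto simp: gen_join1.hyps jcl jl jr)
next
  case (gen_join2 i x y)
  show ?case
    by (rule ple.W0[OF gen_join2.hyps(1)]) (simp add: gen_join2.hyps jcl lrefl)
next
  case (gen_meet1 i x y)
  have "ole (L i) (Uf (LMeet (LVar x) (LVar y)) i) (Some (x \<sqinter>\<^bsub>L i\<^esub> y))"
  proof (cases "\<exists>k\<in>I. ole (L k) (omeet (L k) (Uf (LVar x) k) (Uf (LVar y) k)) (Some z)")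
    case True
    then have "Uf (LMeet (LVar x) (LVar y)) i = Some z" by (simp only: Uf.simps if_True)
    then show ?thesis using zle[OF gen_meet1.hyps(1) mcl[OF gen_meet1.hyps]] by simp
  next
    case False
    then have "Uf (LMeet (LVar x) (LVar y)) i = omeet (L i) (Uf (LVar x) i) (Uf (LVar y) i)" by (simp only: Uf.simps if_False)
    then show ?thesis using gen_meet1.hyps lrefl mcl by simp
  qed
  then show ?case
    by (intro ple.W0[OF gen_meet1.hyps(1)]) (simp add: gen_meet1.hyps mcl)
next
  case (gen_meet2 i x y)
  show ?case
    by (rule ple.W3; rule ple_var[OF gen_meet2.hyps(1)]) (auto simp: gen_meet2.hyps mcl ml mr)
qed

end

context cpx begin

lemma gj1: "i\<in>I \<Longrightarrow> x \<in> carrier (L i) \<Longrightarrow> y \<in> carrier (L i) \<Longrightarrow> cp_le L I z (LJoin (LVar x) (LVar y)) (LVar (x \<squnion>\<^bsub>L i\<^esub> y))"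
  by (rule cp_le.gen_join1)
lemma gj2: "i\<in>I \<Longrightarrow> x \<in> carrier (L i) \<Longrightarrow> y \<in> carrier (L i) \<Longrightarrow> cp_le L I z (LVar (x \<squnion>\<^bsub>L i\<^esub> y)) (LJoin (LVar x) (LVar y))"
  by (rule cp_le.gen_join2)
lemma gm1: "i\<in>I \<Longrightarrow> x \<in> carrier (L i) \<Longrightarrow> y \<in> carrier (L i) \<Longrightarrow> cp_le L I z (LMeet (LVar x) (LVar y)) (LVar (x \<sqinter>\<^bsub>L i\<^esub> y))"
  by (rule cp_le.gen_meet1)
lemma gm2: "i\<in>I \<Longrightarrow> x \<in> carrier (L i) \<Longrightarrow> y \<in> carrier (L i) \<Longrightarrow> cp_le L I z (LVar (x \<sqinter>\<^bsub>L i\<^esub> y)) (LMeet (LVar x) (LVar y))"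
  by (rule cp_le.gen_meet2)

lemma cp_sets: "cp_le L I z s t \<Longrightarrow> set_lterm s \<subseteq> G \<and> set_lterm t \<subseteq> G"
  by (induction rule: cp_le.induct) (auto simp: car_G jcl mcl)

lemma cp_tr: "cp_le L I z s t \<Longrightarrow> cp_le L I z t u \<Longrightarrow> cp_le L I z s u"
  by (rule cp_le.trans)

lemma varle: "i\<in>I \<Longrightarrow> c \<in> carrier (L i) \<Longrightarrow> d \<in> carrier (L i) \<Longrightarrow> c \<sqsubseteq>\<^bsub>L i\<^esub> d \<Longrightarrow> cp_le L I z (LVar c) (LVar d)"
proof -
  assume i: "i\<in>I" and c: "c \<in> carrier (L i)" and d: "d \<in> carrier (L i)" and cd: "c \<sqsubseteq>\<^bsub>L i\<^esub> d"
  have 1: "cp_le L I z (LVar c) (LJoin (LVar c) (LVar d))"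
    by (rule cp_le.join_upper1) (use i c d car_G in auto)
  have 2: "cp_le L I z (LJoin (LVar c) (LVar d)) (LVar (c \<squnion>\<^bsub>L i\<^esub> d))"
    by (rule gj1[OF i c d])
  show ?thesis using cp_tr[OF 1 2] join_eq[OF i cd c d] by simp
qed

lemma cp_jmono: "cp_le L I z a a' \<Longrightarrow> cp_le L I z b b' \<Longrightarrow> cp_le L I z (LJoin a b) (LJoin a' b')"
proof -
  assume ab: "cp_le L I z a a'" "cp_le L I z b b'"
  have s: "set_lterm a' \<subseteq> G" "set_lterm b' \<subseteq> G" using cp_sets ab by blast+
  show ?thesis
    by (rule cp_le.join_least; rule cp_tr[OF _ cp_le.join_upper1] cp_tr[OF _ cp_le.join_upper2])
      (use ab s in auto)
qed

lemma cp_mmono: "cp_le L I z a a' \<Longrightarrow> cp_le L I z b b' \<Longrightarrow> cp_le L I z (LMeet a b) (LMeet a' b')"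
proof -
  assume ab: "cp_le L I z a a'" "cp_le L I z b b'"
  have s: "set_lterm a \<subseteq> G" "set_lterm b \<subseteq> G" using cp_sets ab by blast+
  show ?thesis
    by (rule cp_le.meet_greatest; rule cp_tr[OF cp_le.meet_lower1] cp_tr[OF cp_le.meet_lower2])
      (use ab s in auto)
qed

lemma Usound: "i\<in>I \<Longrightarrow> set_lterm p \<subseteq> G \<Longrightarrow> Uf p i = Some c \<Longrightarrow> cp_le L I z p (LVar c)"
proof (induction p arbitrary: i c)
  case (LVar x)
  then show ?case by (auto split: if_splits intro: cp_le.refl)
next
  case (LJoin p0 p1)
  obtain c0 c1 where c: "Uf p0 i = Some c0" "Uf p1 i = Some c1" "c = c0 \<squnion>\<^bsub>L i\<^esub> c1"
    using LJoin.prems(3) by (cases "Uf p0 i"; cases "Uf p1 i") auto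
  have cc: "c0 \<in> carrier (L i)" "c1 \<in> carrier (L i)" using Ucar[OF LJoin.prems(1)] c by force+
  have "cp_le L I z (LJoin p0 p1) (LJoin (LVar c0) (LVar c1))"
    using cp_jmono LJoin c by auto
  then show ?case using cp_tr gj1[OF LJoin.prems(1) cc] c(3) by blast
next
  case (LMeet p0 p1)
  have om: "cp_le L I z (LMeet p0 p1) (LVar d)" if k: "k\<in>I" and e: "omeet (L k) (Uf p0 k) (Uf p1 k) = Some d" for k d
  proof (cases "Uf p0 k"; cases "Uf p1 k")
    fix c0 c1 assume c: "Uf p0 k = Some c0" "Uf p1 k = Some c1"
    have cc: "c0 \<in> carrier (L k)" "c1 \<in> carrier (L k)" using Ucar[OF k] c by force+
    have "cp_le L I z (LMeet p0 p1) (LMeet (LVar c0) (LVar c1))"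
      using cp_mmono LMeet c k by auto
    then show ?thesis using cp_tr gm1[OF k cc] c e by auto
  next
    fix c0 assume c: "Uf p0 k = Some c0" "Uf p1 k = None"
    then have "d = c0" using e by simp
    then show ?thesis using cp_tr[OF cp_le.meet_lower1] LMeet c k by auto
  next
    fix c1 assume c: "Uf p0 k = None" "Uf p1 k = Some c1"
    then have "d = c1" using e by simp
    then show ?thesis using cp_tr[OF cp_le.meet_lower2] LMeet c k by auto
  next
    assume "Uf p0 k = None" "Uf p1 k = None" then show ?thesis using e by simp
  qed
  show ?case
  proof (cases "\<exists>k\<in>I. ole (L k) (omeet (L k) (Uf p0 k) (Uf p1 k)) (Some z)")
    case True
    then obtain k where k: "k\<in>I" "ole (L k) (omeet (L k) (Uf p0 k) (Uf p1 k)) (Some z)" by blast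
    then obtain d where d: "omeet (L k) (Uf p0 k) (Uf p1 k) = Some d" "d \<sqsubseteq>\<^bsub>L k\<^esub> z"
      by (cases "omeet (L k) (Uf p0 k) (Uf p1 k)") auto
    have dc: "d \<in> carrier (L k)" using omeet_car[OF k(1) Ucar[OF k(1)] Ucar[OF k(1)]] d by auto
    have "c = z" using True LMeet.prems(3) by simp
    then show ?thesis using cp_tr[OF om[OF k(1) d(1)] varle[OF k(1) dc zin[OF k(1)] d(2)]] by simp
  next
    case False
    then have "omeet (L i) (Uf p0 i) (Uf p1 i) = Some c" using LMeet.prems(3) by simp
    then show ?thesis using om LMeet.prems(1) by blast
  qed
qed

lemma Dsound: "i\<in>I \<Longrightarrow> set_lterm q \<subseteq> G \<Longrightarrow> cp_le L I z (LVar (Df q i)) q"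
proof (induction q)
  case (LVar x)
  show ?case
  proof (cases "x \<in> carrier (L i)")
    case True then show ?thesis using LVar by (auto intro: cp_le.refl)
  next
    case False
    obtain k where k: "k\<in>I" "x \<in> carrier (L k)" using gens_cases LVar.prems by auto
    show ?thesis using False varle[OF k(1) zin[OF k(1)] k(2) zle[OF k]] by simp
  qed
next
  case (LJoin q0 q1)
  have "cp_le L I z (LJoin (LVar (Df q0 i)) (LVar (Df q1 i))) (LJoin q0 q1)"
    using cp_jmono LJoin by auto
  then show ?case using cp_tr[OF gj2[OF LJoin.prems(1) Dcar[OF LJoin.prems(1)] Dcar[OF LJoin.prems(1)]]] by simp
next
  case (LMeet q0 q1)
  have "cp_le L I z (LMeet (LVar (Df q0 i)) (LVar (Df q1 i))) (LMeet q0 q1)"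
    using cp_mmono LMeet by auto
  then show ?case using cp_tr[OF gm2[OF LMeet.prems(1) Dcar[OF LMeet.prems(1)] Dcar[OF LMeet.prems(1)]]] by simp
qed

lemma ple_sound: "ple p q \<Longrightarrow> set_lterm p \<subseteq> G \<Longrightarrow> set_lterm q \<subseteq> G \<Longrightarrow> cp_le L I z p q"
proof (induction rule: ple.induct)
  case (W0 i p q)
  obtain c where c: "Uf p i = Some c" "c \<sqsubseteq>\<^bsub>L i\<^esub> Df q i" using W0.hyps(2) by (cases "Uf p i") auto
  have cc: "c \<in> carrier (L i)" using Ucar[OF W0.hyps(1)] c by force
  show ?case using cp_tr[OF Usound[OF W0.hyps(1) W0.prems(1) c(1)] cp_tr[OF varle[OF W0.hyps(1) cc Dcar[OF W0.hyps(1)] c(2)] Dsound[OF W0.hyps(1) W0.prems(2)]]] .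
next
  case (W1 p0 q p1) then show ?case by (auto intro: cp_le.join_least)
next
  case (W2a p0 q p1) then show ?case by (auto intro: cp_tr[OF cp_le.meet_lower1])
next
  case (W2b p1 q p0) then show ?case by (auto intro: cp_tr[OF cp_le.meet_lower2])
next
  case (W3 p q0 q1) then show ?case by (auto intro: cp_le.meet_greatest)
next
  case (W4a p q0 q1) then show ?case by (auto intro: cp_tr[OF _ cp_le.join_upper1])
next
  case (W4b p q1 q0) then show ?case by (auto intro: cp_tr[OF _ cp_le.join_upper2])
qed

lemma inv_meet_r: "ple p Q \<Longrightarrow> Q = LMeet q0 q1 \<Longrightarrow> ple p q0 \<and> ple p q1"
proof (induction p Q rule: ple.induct)
  case (W0 i p Q)
  have "ole (L i) (Uf p i) (Some (Df q0 i))"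
    using ole_trans[OF W0.hyps(1) W0.hyps(2) _ Ucar[OF W0.hyps(1)] sDc[OF W0.hyps(1)] sDc[OF W0.hyps(1)]]
      ml[OF W0.hyps(1) Dcar[OF W0.hyps(1)] Dcar[OF W0.hyps(1)]] W0.prems by simp
  moreover have "ole (L i) (Uf p i) (Some (Df q1 i))"
    using ole_trans[OF W0.hyps(1) W0.hyps(2) _ Ucar[OF W0.hyps(1)] sDc[OF W0.hyps(1)] sDc[OF W0.hyps(1)]]
      mr[OF W0.hyps(1) Dcar[OF W0.hyps(1)] Dcar[OF W0.hyps(1)]] W0.prems by simp
  ultimately show ?case using ple.W0[OF W0.hyps(1)] by blast
next
  case (W1 p0 q p1) then show ?case by (blast intro: ple.W1)
next
  case (W2a p0 q p1) then show ?case by (blast intro: ple.W2a)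
next
  case (W2b p1 q p0) then show ?case by (blast intro: ple.W2b)
next
  case (W3 p q0 q1) then show ?case by simp
next
  case (W4a p q0 q1) then show ?case by simp
next
  case (W4b p q1 q0) then show ?case by simp
qed

lemma inv_join_l: "ple P q \<Longrightarrow> P = LJoin p0 p1 \<Longrightarrow> ple p0 q \<and> ple p1 q"
proof (induction P q rule: ple.induct)
  case (W0 i P q)
  have i: "i\<in>I" by (rule W0.hyps(1))
  have "ole (L i) (Uf p0 i) (Some (Df q i))"
    using ole_trans[OF i ojoin_ub1[OF i Ucar[OF i] Ucar[OF i]] _ Ucar[OF i] ojoin_car[OF i Ucar[OF i] Ucar[OF i]] sDc[OF i]]
      W0.hyps(2) W0.prems by simp
  moreover have "ole (L i) (Uf p1 i) (Some (Df q i))"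
    using ole_trans[OF i ojoin_ub2[OF i Ucar[OF i] Ucar[OF i]] _ Ucar[OF i] ojoin_car[OF i Ucar[OF i] Ucar[OF i]] sDc[OF i]]
      W0.hyps(2) W0.prems by simp
  ultimately show ?case using ple.W0[OF i] by blast
next
  case (W1 p0 q p1) then show ?case by simp
next
  case (W2a p0 q p1) then show ?case by simp
next
  case (W2b p1 q p0) then show ?case by simp
next
  case (W3 p q0 q1) then show ?case by (blast intro: ple.W3)
next
  case (W4a p q0 q1) then show ?case by (blast intro: ple.W4a)
next
  case (W4b p q1 q0) then show ?case by (blast intro: ple.W4b)
qed

end


locale cont = cpx L I z for L :: "'i \<Rightarrow> 'a gorder" and I z +
  fixes \<Lambda> :: "'l::order set" and A :: "'l \<Rightarrow> ('i \<times> nat \<Rightarrow> 'a)" and a :: "'i \<times> nat \<Rightarrow> 'a"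
  assumes uc: "\<And>i. i\<in>I \<Longrightarrow> upper_continuous (L i)"
   and dne: "\<Lambda> \<noteq> {}" and dir: "\<And>l m. l\<in>\<Lambda> \<Longrightarrow> m\<in>\<Lambda> \<Longrightarrow> \<exists>k\<in>\<Lambda>. l \<le> k \<and> m \<le> k"
   and A_in: "\<And>l. l\<in>\<Lambda> \<Longrightarrow> A l \<in> carrier (prodL L I)"
   and iso: "\<And>l m. l\<in>\<Lambda> \<Longrightarrow> m\<in>\<Lambda> \<Longrightarrow> l \<le> m \<Longrightarrow> A l \<sqsubseteq>\<^bsub>prodL L I\<^esub> A m"
   and a_in: "a \<in> carrier (prodL L I)"
   and a_sup: "is_lub (prodL L I) a (A ` \<Lambda>)"
begin

lemma UmZ: "\<exists>k\<in>I. ole (L k) (omeet (L k) (Uf p k) (Uf q k)) (Some z) \<Longrightarrow> Uf (LMeet p q) i = Some z"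
  by simp
lemma UmN: "\<not> (\<exists>k\<in>I. ole (L k) (omeet (L k) (Uf p k) (Uf q k)) (Some z)) \<Longrightarrow> Uf (LMeet p q) i = omeet (L i) (Uf p i) (Uf q i)"
  by simp
declare Uf.simps(3)[simp del]

definition cofinal :: "'l set \<Rightarrow> bool" where
  "cofinal S \<longleftrightarrow> S \<subseteq> \<Lambda> \<and> (\<forall>l\<in>\<Lambda>. \<exists>s\<in>S. l \<le> s)"

lemma cof_L: "cofinal \<Lambda>" unfolding cofinal_def by auto

lemma cof_ne: "cofinal S \<Longrightarrow> S \<noteq> {}" unfolding cofinal_def using dne by blast

lemma cof_dir: "cofinal S \<Longrightarrow> l\<in>\<Lambda> \<Longrightarrow> m\<in>\<Lambda> \<Longrightarrow> \<exists>s\<in>S. l \<le> s \<and> m \<le> s"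
proof -
  assume S: "cofinal S" and l: "l\<in>\<Lambda>" and m: "m\<in>\<Lambda>"
  obtain k where k: "k\<in>\<Lambda>" "l \<le> k" "m \<le> k" using dir[OF l m] by blast
  obtain s where s: "s\<in>S" "k \<le> s" using S k(1) unfolding cofinal_def by blast
  show ?thesis using s k order_trans by blast
qed

lemma cof_above: "cofinal S \<Longrightarrow> l0\<in>\<Lambda> \<Longrightarrow> cofinal {s\<in>S. l0 \<le> s}"
proof -
  assume S: "cofinal S" and l0: "l0\<in>\<Lambda>"
  have "\<exists>s\<in>{s\<in>S. l0 \<le> s}. l \<le> s" if l: "l\<in>\<Lambda>" for l
    using cof_dir[OF S l l0] by auto
  then show ?thesis using S unfolding cofinal_def by auto
qed

lemma cof_split2: "cofinal S \<Longrightarrow> S \<subseteq> T1 \<union> T2 \<Longrightarrow> cofinal (S \<inter> T1) \<or> cofinal (S \<inter> T2)"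
proof (rule ccontr)
  assume S: "cofinal S" "S \<subseteq> T1 \<union> T2" and n: "\<not> (cofinal (S \<inter> T1) \<or> cofinal (S \<inter> T2))"
  have sub: "S \<inter> T1 \<subseteq> \<Lambda>" "S \<inter> T2 \<subseteq> \<Lambda>" using S unfolding cofinal_def by auto
  obtain l1 where l1: "l1\<in>\<Lambda>" "\<forall>s\<in>S \<inter> T1. \<not> l1 \<le> s" using n sub unfolding cofinal_def by blast
  obtain l2 where l2: "l2\<in>\<Lambda>" "\<forall>s\<in>S \<inter> T2. \<not> l2 \<le> s" using n sub unfolding cofinal_def by blast
  obtain s where s: "s\<in>S" "l1 \<le> s" "l2 \<le> s" using cof_dir[OF S(1) l1(1) l2(1)] by blast
  show False using s S(2) l1 l2 by blast
qed

lemma cof_fin: "finite F \<Longrightarrow> cofinal S \<Longrightarrow> S \<subseteq> (\<Union>f\<in>F. T f) \<Longrightarrow> \<exists>f\<in>F. cofinal (S \<inter> T f)"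
proof (induction F arbitrary: S rule: finite_induct)
  case empty then show ?case using cof_ne by auto
next
  case (insert g F)
  have "S \<subseteq> T g \<union> (\<Union>f\<in>F. T f)" using insert.prems by auto
  then have "cofinal (S \<inter> T g) \<or> cofinal (S \<inter> (\<Union>f\<in>F. T f))" using cof_split2 insert.prems by blast
  then show ?case
  proof
    assume "cofinal (S \<inter> T g)" then show ?thesis by blast
  next
    assume c: "cofinal (S \<inter> (\<Union>f\<in>F. T f))"
    then obtain f where "f\<in>F" "cofinal (S \<inter> (\<Union>f\<in>F. T f) \<inter> T f)" using insert.IH by blast
    moreover have "S \<inter> (\<Union>f\<in>F. T f) \<inter> T f = S \<inter> T f" using \<open>f\<in>F\<close> by blast
    ultimately show ?thesis by auto
  qed
qed

lemma cof_sub: "cofinal S \<Longrightarrow> S \<subseteq> \<Lambda>" unfolding cofinal_def by blast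

lemma prod_car: "b \<in> carrier (prodL L I) \<Longrightarrow> i\<in>I \<Longrightarrow> b (i,n) \<in> carrier (L i)"
  unfolding prodL_def by auto

lemma A_car: "l\<in>\<Lambda> \<Longrightarrow> i\<in>I \<Longrightarrow> A l (i,n) \<in> carrier (L i)" using A_in prod_car by blast
lemma a_car: "i\<in>I \<Longrightarrow> a (i,n) \<in> carrier (L i)" using a_in prod_car by blast

lemma A_iso: "l\<in>\<Lambda> \<Longrightarrow> m\<in>\<Lambda> \<Longrightarrow> l \<le> m \<Longrightarrow> i\<in>I \<Longrightarrow> A l (i,n) \<sqsubseteq>\<^bsub>L i\<^esub> A m (i,n)"
  using iso unfolding prodL_def by auto

lemma a_up: "l\<in>\<Lambda> \<Longrightarrow> i\<in>I \<Longrightarrow> A l (i,n) \<sqsubseteq>\<^bsub>L i\<^esub> a (i,n)"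
proof -
  assume l: "l\<in>\<Lambda>" and i: "i\<in>I"
  have "a \<in> Upper (prodL L I) (A ` \<Lambda>)" using a_sup unfolding least_def by blast
  then have "A l \<sqsubseteq>\<^bsub>prodL L I\<^esub> a" using l A_in unfolding Upper_def by auto
  then show ?thesis using i unfolding prodL_def by auto
qed

lemma lubcomp: "i\<in>I \<Longrightarrow> cofinal S \<Longrightarrow> c \<in> carrier (L i) \<Longrightarrow> (\<forall>l\<in>S. A l (i,n) \<sqsubseteq>\<^bsub>L i\<^esub> c) \<Longrightarrow> a (i,n) \<sqsubseteq>\<^bsub>L i\<^esub> c"
proof -
  assume i: "i\<in>I" and S: "cofinal S" and c: "c \<in> carrier (L i)" and le: "\<forall>l\<in>S. A l (i,n) \<sqsubseteq>\<^bsub>L i\<^esub> c"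
  define b where "b = a((i,n) := c)"
  have bc: "b \<in> carrier (prodL L I)"
    using a_in c i unfolding b_def prodL_def by auto
  have "\<forall>x\<in>A ` \<Lambda>. x \<sqsubseteq>\<^bsub>prodL L I\<^esub> b"
  proof
    fix x assume "x \<in> A ` \<Lambda>"
    then obtain l where l: "l\<in>\<Lambda>" "x = A l" by blast
    obtain s where s: "s\<in>S" "l \<le> s" using S l unfolding cofinal_def by blast
    have sL: "s\<in>\<Lambda>" using S s unfolding cofinal_def by blast
    have "A l (i,n) \<sqsubseteq>\<^bsub>L i\<^esub> c"
      using ltrans[OF i A_iso[OF l(1) sL s(2) i] _ A_car[OF l(1) i] A_car[OF sL i] c] le s by blast
    moreover have "A l (j,m) \<sqsubseteq>\<^bsub>L j\<^esub> a (j,m)" if "j\<in>I" for j m using a_up l that by blast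
    ultimately show "x \<sqsubseteq>\<^bsub>prodL L I\<^esub> b" using l unfolding b_def prodL_def by auto
  qed
  then have "b \<in> Upper (prodL L I) (A ` \<Lambda>)" using bc unfolding Upper_def by auto
  then have "a \<sqsubseteq>\<^bsub>prodL L I\<^esub> b" using a_sup unfolding least_def by blast
  then have "\<forall>j\<in>I. \<forall>m. a (j,m) \<sqsubseteq>\<^bsub>L j\<^esub> b (j,m)" unfolding prodL_def by simp
  then have "a (i,n) \<sqsubseteq>\<^bsub>L i\<^esub> b (i,n)" using i by blast
  then show ?thesis unfolding b_def by simp
qed

lemma subst_G: "b \<in> carrier (prodL L I) \<Longrightarrow> set_lterm p \<subseteq> I \<times> UNIV \<Longrightarrow> set_lterm (map_lterm b p) \<subseteq> G"
  using prod_car car_G by (force simp: lterm.set_map)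

lemma ple_subst: "b \<in> carrier (prodL L I) \<Longrightarrow> b' \<in> carrier (prodL L I) \<Longrightarrow>
  (\<forall>i\<in>I. \<forall>n. b (i,n) \<sqsubseteq>\<^bsub>L i\<^esub> b' (i,n)) \<Longrightarrow> set_lterm p \<subseteq> I \<times> UNIV \<Longrightarrow> ple (map_lterm b p) (map_lterm b' p)"
proof (induction p)
  case (LVar v)
  obtain i n where v: "v = (i,n)" "i\<in>I" using LVar.prems(4) by (cases v) auto
  show ?case using ple_var[OF v(2) prod_car[OF LVar.prems(1) v(2)] prod_car[OF LVar.prems(2) v(2)]] LVar.prems(3) v by simp
next
  case (LJoin p1 p2) then show ?case by (auto intro: ple.intros)
next
  case (LMeet p1 p2) then show ?case by (auto intro: ple.intros)
qed

lemma Umono: "set_lterm p \<subseteq> I \<times> UNIV \<Longrightarrow> l\<in>\<Lambda> \<Longrightarrow> i\<in>I \<Longrightarrow> ole (L i) (Uf (map_lterm (A l) p) i) (Uf (map_lterm a p) i)"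
proof -
  assume p: "set_lterm p \<subseteq> I \<times> UNIV" and l: "l\<in>\<Lambda>" and i: "i\<in>I"
  have "ple (map_lterm (A l) p) (map_lterm a p)"
    by (rule ple_subst[OF A_in[OF l] a_in _ p]) (use a_up l in blast)
  then show ?thesis using MU i by blast
qed

lemma Umono2: "set_lterm p \<subseteq> I \<times> UNIV \<Longrightarrow> l\<in>\<Lambda> \<Longrightarrow> m\<in>\<Lambda> \<Longrightarrow> l \<le> m \<Longrightarrow> i\<in>I \<Longrightarrow> ole (L i) (Uf (map_lterm (A l) p) i) (Uf (map_lterm (A m) p) i)"
proof -
  assume p: "set_lterm p \<subseteq> I \<times> UNIV" and l: "l\<in>\<Lambda>" "m\<in>\<Lambda>" "l \<le> m" and i: "i\<in>I"
  have "ple (map_lterm (A l) p) (map_lterm (A m) p)"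
    by (rule ple_subst[OF A_in[OF l(1)] A_in[OF l(2)] _ p]) (use A_iso l in blast)
  then show ?thesis using MU i by blast
qed

lemma Zred: "b \<in> carrier (prodL L I) \<Longrightarrow> set_lterm p \<subseteq> I \<times> UNIV \<Longrightarrow> k\<in>I \<Longrightarrow> k \<notin> fst ` set_lterm p \<Longrightarrow>
  Uf (map_lterm b p) k = None \<or> ole (L k) (Uf (map_lterm b p) k) (Some z)"
proof (induction p)
  case (LVar v)
  obtain j n where v: "v = (j,n)" "j\<in>I" "j \<noteq> k" using LVar.prems by (cases v) auto
  have "b (j,n) \<in> carrier (L j)" using prod_car LVar.prems(1) v by blast
  then have "b (j,n) \<in> carrier (L k) \<Longrightarrow> b (j,n) = z" using disj[OF v(2) LVar.prems(3) v(3)] by blast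
  then show ?case using v lrefl[OF LVar.prems(3) zin[OF LVar.prems(3)]] by auto
next
  case (LJoin p1 p2)
  have h: "Uf (map_lterm b p1) k = None \<or> ole (L k) (Uf (map_lterm b p1) k) (Some z)"
          "Uf (map_lterm b p2) k = None \<or> ole (L k) (Uf (map_lterm b p2) k) (Some z)"
    using LJoin by auto
  show ?case
  proof (cases "Uf (map_lterm b p1) k = None \<or> Uf (map_lterm b p2) k = None")
    case True then show ?thesis by auto
  next
    case False
    then have "ole (L k) (Uf (map_lterm b p1) k) (Some z)" "ole (L k) (Uf (map_lterm b p2) k) (Some z)" using h by auto
    then have "ole (L k) (ojoin (L k) (Uf (map_lterm b p1) k) (Uf (map_lterm b p2) k)) (Some z)"
      using ojoin_le[OF LJoin.prems(3) _ _ Ucar[OF LJoin.prems(3)] Ucar[OF LJoin.prems(3)] szc[OF LJoin.prems(3)]] by blast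
    then show ?thesis by simp
  qed
next
  case (LMeet p1 p2)
  have k: "k\<in>I" by (rule LMeet.prems(3))
  have h: "Uf (map_lterm b p1) k = None \<or> ole (L k) (Uf (map_lterm b p1) k) (Some z)"
          "Uf (map_lterm b p2) k = None \<or> ole (L k) (Uf (map_lterm b p2) k) (Some z)"
    using LMeet by auto
  have "omeet (L k) (Uf (map_lterm b p1) k) (Uf (map_lterm b p2) k) = None \<or>
        ole (L k) (omeet (L k) (Uf (map_lterm b p1) k) (Uf (map_lterm b p2) k)) (Some z)"
  proof (cases "Uf (map_lterm b p1) k"; cases "Uf (map_lterm b p2) k")
    fix c1 c2 assume c: "Uf (map_lterm b p1) k = Some c1" "Uf (map_lterm b p2) k = Some c2"
    have cc: "c1 \<in> carrier (L k)" "c2 \<in> carrier (L k)" using Ucar[OF k] c by force+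
    have "c1 \<sqsubseteq>\<^bsub>L k\<^esub> z" using h c by simp
    then have "c1 \<sqinter>\<^bsub>L k\<^esub> c2 \<sqsubseteq>\<^bsub>L k\<^esub> z" using mb1[OF k _ cc zin[OF k]] by blast
    then show ?thesis using c by simp
  qed (use h in auto)
  then show ?case
  proof (cases "\<exists>k\<in>I. ole (L k) (omeet (L k) (Uf (map_lterm b p1) k) (Uf (map_lterm b p2) k)) (Some z)")
    case True
    then show ?thesis using UmZ[OF True] lrefl[OF k zin[OF k]] by simp
  next
    case False
    then show ?thesis using UmN[OF False] \<open>omeet (L k) _ _ = None \<or> _\<close> by simp
  qed
qed

end


lemma lub_le: "is_lub M s X \<Longrightarrow> d \<in> carrier M \<Longrightarrow> (\<forall>x\<in>X. x \<sqsubseteq>\<^bsub>M\<^esub> d) \<Longrightarrow> s \<sqsubseteq>\<^bsub>M\<^esub> d"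
  unfolding least_def Upper_def by auto

context cont begin
declare Uf.simps(3)[simp del]

lemma mk_lub: "cofinal S \<Longrightarrow> (\<forall>l\<in>S. f l \<in> carrier (L k)) \<Longrightarrow> x0 \<in> carrier (L k) \<Longrightarrow> (\<forall>l\<in>S. f l \<sqsubseteq>\<^bsub>L k\<^esub> x0)
  \<Longrightarrow> (\<forall>c\<in>carrier (L k). (\<forall>l\<in>S. f l \<sqsubseteq>\<^bsub>L k\<^esub> c) \<longrightarrow> x0 \<sqsubseteq>\<^bsub>L k\<^esub> c) \<Longrightarrow> is_lub (L k) x0 (f ` S)"
  unfolding least_def Upper_def by auto

lemma mk_dir: "cofinal S \<Longrightarrow> (\<forall>l\<in>S. \<forall>m\<in>S. l \<le> m \<longrightarrow> f l \<sqsubseteq>\<^bsub>L k\<^esub> f m) \<Longrightarrow> directed_in (L k) (f ` S)"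
proof -
  assume S: "cofinal S" and m: "\<forall>l\<in>S. \<forall>m\<in>S. l \<le> m \<longrightarrow> f l \<sqsubseteq>\<^bsub>L k\<^esub> f m"
  have "\<exists>w\<in>f ` S. x \<sqsubseteq>\<^bsub>L k\<^esub> w \<and> y \<sqsubseteq>\<^bsub>L k\<^esub> w" if xy: "x \<in> f ` S" "y \<in> f ` S" for x y
  proof -
    obtain l1 l2 where l: "l1\<in>S" "l2\<in>S" "x = f l1" "y = f l2" using xy by blast
    obtain s where s: "s\<in>S" "l1 \<le> s" "l2 \<le> s" using cof_dir[OF S] l cof_sub[OF S] by blast
    show ?thesis using s l m by blast
  qed
  then show ?thesis unfolding directed_in_def using cof_ne[OF S] by blast
qed

lemma omeet_cont:
  fixes u v :: "'l \<Rightarrow> 'a option"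
  assumes k: "k\<in>I"
    and ucar: "\<forall>l\<in>\<Lambda>. set_option (u l) \<subseteq> carrier (L k)" and uacar: "set_option ua \<subseteq> carrier (L k)"
    and um: "\<forall>l\<in>\<Lambda>. ole (L k) (u l) ua"
    and um2: "\<forall>l\<in>\<Lambda>. \<forall>m\<in>\<Lambda>. l \<le> m \<longrightarrow> ole (L k) (u l) (u m)"
    and ul: "\<forall>S c. cofinal S \<longrightarrow> c \<in> carrier (L k) \<longrightarrow> (\<forall>l\<in>S. ole (L k) (u l) (Some c)) \<longrightarrow> ole (L k) ua (Some c)"
    and ue: "ua = None \<longrightarrow> (\<exists>l0\<in>\<Lambda>. \<forall>l\<in>\<Lambda>. l0 \<le> l \<longrightarrow> u l = None)"
    and vcar: "\<forall>l\<in>\<Lambda>. set_option (v l) \<subseteq> carrier (L k)" and vacar: "set_option va \<subseteq> carrier (L k)"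
    and vm: "\<forall>l\<in>\<Lambda>. ole (L k) (v l) va"
    and vm2: "\<forall>l\<in>\<Lambda>. \<forall>m\<in>\<Lambda>. l \<le> m \<longrightarrow> ole (L k) (v l) (v m)"
    and vl: "\<forall>S c. cofinal S \<longrightarrow> c \<in> carrier (L k) \<longrightarrow> (\<forall>l\<in>S. ole (L k) (v l) (Some c)) \<longrightarrow> ole (L k) va (Some c)"
    and ve: "va = None \<longrightarrow> (\<exists>l0\<in>\<Lambda>. \<forall>l\<in>\<Lambda>. l0 \<le> l \<longrightarrow> v l = None)"
    and S: "cofinal S" and d: "d \<in> carrier (L k)"
    and H: "\<forall>l\<in>S. ole (L k) (omeet (L k) (u l) (v l)) (Some d)"
  shows "ole (L k) (omeet (L k) ua va) (Some d)"
proof (cases ua; cases va)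
  assume n: "ua = None" "va = None"
  obtain l0 where l0: "l0\<in>\<Lambda>" "\<forall>l\<in>\<Lambda>. l0 \<le> l \<longrightarrow> u l = None" using ue n by blast
  obtain l1 where l1: "l1\<in>\<Lambda>" "\<forall>l\<in>\<Lambda>. l1 \<le> l \<longrightarrow> v l = None" using ve n by blast
  obtain s where s: "s\<in>S" "l0 \<le> s" "l1 \<le> s" using cof_dir[OF S l0(1) l1(1)] by blast
  have "s\<in>\<Lambda>" using s cof_sub[OF S] by blast
  then have "u s = None" "v s = None" using l0 l1 s by blast+
  moreover have "ole (L k) (omeet (L k) (u s) (v s)) (Some d)" using H s by blast
  ultimately show ?thesis by simp
next
  fix v0 assume n: "ua = None" "va = Some v0"
  obtain l0 where l0: "l0\<in>\<Lambda>" "\<forall>l\<in>\<Lambda>. l0 \<le> l \<longrightarrow> u l = None" using ue n by blast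
  have S': "cofinal {s\<in>S. l0 \<le> s}" using cof_above[OF S l0(1)] .
  have "\<forall>l\<in>{s\<in>S. l0 \<le> s}. ole (L k) (v l) (Some d)"
  proof
    fix l assume "l\<in>{s\<in>S. l0 \<le> s}"
    then have "l\<in>S" "u l = None" using l0 cof_sub[OF S] by auto
    then show "ole (L k) (v l) (Some d)" using H by force
  qed
  then have "ole (L k) va (Some d)" using vl S' d by blast
  then show ?thesis using n by simp
next
  fix u0 assume n: "ua = Some u0" "va = None"
  obtain l0 where l0: "l0\<in>\<Lambda>" "\<forall>l\<in>\<Lambda>. l0 \<le> l \<longrightarrow> v l = None" using ve n by blast
  have S': "cofinal {s\<in>S. l0 \<le> s}" using cof_above[OF S l0(1)] .
  have "\<forall>l\<in>{s\<in>S. l0 \<le> s}. ole (L k) (u l) (Some d)"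
  proof
    fix l assume "l\<in>{s\<in>S. l0 \<le> s}"
    then have "l\<in>S" "v l = None" using l0 cof_sub[OF S] by auto
    then show "ole (L k) (u l) (Some d)" using H by (cases "u l") force+
  qed
  then have "ole (L k) ua (Some d)" using ul S' d by blast
  then show ?thesis using n by simp
next
  fix u0 v0 assume n: "ua = Some u0" "va = Some v0"
  define uu where "uu l = the (u l)" for l
  define vv where "vv l = the (v l)" for l
  have u0c: "u0 \<in> carrier (L k)" "v0 \<in> carrier (L k)" using uacar vacar n by auto
  have uS: "u l = Some (uu l)" if "l\<in>\<Lambda>" for l using um that n unfolding uu_def by (cases "u l") auto
  have vS: "v l = Some (vv l)" if "l\<in>\<Lambda>" for l using vm that n unfolding vv_def by (cases "v l") auto
  have uuc: "uu l \<in> carrier (L k)" if "l\<in>\<Lambda>" for l using ucar uS[OF that] that by fastforce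
  have vvc: "vv l \<in> carrier (L k)" if "l\<in>\<Lambda>" for l using vcar vS[OF that] that by fastforce
  have Ssub: "S \<subseteq> \<Lambda>" using cof_sub[OF S] .
  have lubu: "is_lub (L k) u0 (uu ` S)"
  proof (rule mk_lub[OF S])
    show "\<forall>l\<in>S. uu l \<in> carrier (L k)" using uuc Ssub by blast
    show "u0 \<in> carrier (L k)" by (rule u0c)
    show "\<forall>l\<in>S. uu l \<sqsubseteq>\<^bsub>L k\<^esub> u0" using um uS n Ssub by fastforce
    show "\<forall>c\<in>carrier (L k). (\<forall>l\<in>S. uu l \<sqsubseteq>\<^bsub>L k\<^esub> c) \<longrightarrow> u0 \<sqsubseteq>\<^bsub>L k\<^esub> c"
    proof (intro ballI impI)
      fix c assume c: "c \<in> carrier (L k)" "\<forall>l\<in>S. uu l \<sqsubseteq>\<^bsub>L k\<^esub> c"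
      then have "\<forall>l\<in>S. ole (L k) (u l) (Some c)" using uS Ssub by fastforce
      then show "u0 \<sqsubseteq>\<^bsub>L k\<^esub> c" using ul S c n by fastforce
    qed
  qed
  have lubv: "is_lub (L k) v0 (vv ` S)"
  proof (rule mk_lub[OF S])
    show "\<forall>l\<in>S. vv l \<in> carrier (L k)" using vvc Ssub by blast
    show "v0 \<in> carrier (L k)" by (rule u0c)
    show "\<forall>l\<in>S. vv l \<sqsubseteq>\<^bsub>L k\<^esub> v0" using vm vS n Ssub by fastforce
    show "\<forall>c\<in>carrier (L k). (\<forall>l\<in>S. vv l \<sqsubseteq>\<^bsub>L k\<^esub> c) \<longrightarrow> v0 \<sqsubseteq>\<^bsub>L k\<^esub> c"
    proof (intro ballI impI)
      fix c assume c: "c \<in> carrier (L k)" "\<forall>l\<in>S. vv l \<sqsubseteq>\<^bsub>L k\<^esub> c"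
      then have "\<forall>l\<in>S. ole (L k) (v l) (Some c)" using vS Ssub by fastforce
      then show "v0 \<sqsubseteq>\<^bsub>L k\<^esub> c" using vl S c n by fastforce
    qed
  qed
  have uum: "\<forall>l\<in>S. \<forall>m\<in>S. l \<le> m \<longrightarrow> uu l \<sqsubseteq>\<^bsub>L k\<^esub> uu m"
    using um2 uS Ssub by fastforce
  have vvm: "\<forall>l\<in>S. \<forall>m\<in>S. l \<le> m \<longrightarrow> vv l \<sqsubseteq>\<^bsub>L k\<^esub> vv m"
    using vm2 vS Ssub by fastforce
  have dirU: "directed_in (L k) (uu ` S)" using mk_dir[OF S uum] .
  have dirV: "directed_in (L k) (vv ` S)" using mk_dir[OF S vvm] .
  have UC: "\<And>x X s. x \<in> carrier (L k) \<Longrightarrow> X \<subseteq> carrier (L k) \<Longrightarrow> directed_in (L k) X \<Longrightarrow> is_lub (L k) s X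
      \<Longrightarrow> is_lub (L k) (x \<sqinter>\<^bsub>L k\<^esub> s) ((\<lambda>y. x \<sqinter>\<^bsub>L k\<^esub> y) ` X)"
    using uc[OF k] unfolding upper_continuous_def by blast
  have Hs: "uu s \<sqinter>\<^bsub>L k\<^esub> vv s \<sqsubseteq>\<^bsub>L k\<^esub> d" if "s\<in>S" for s
    using H that uS vS Ssub by fastforce
  have step: "u0 \<sqinter>\<^bsub>L k\<^esub> vv l \<sqsubseteq>\<^bsub>L k\<^esub> d" if l: "l\<in>S" for l
  proof -
    have HL: "is_lub (L k) (vv l \<sqinter>\<^bsub>L k\<^esub> u0) ((\<lambda>y. vv l \<sqinter>\<^bsub>L k\<^esub> y) ` (uu ` S))"
      using UC[OF vvc _ dirU lubu] l Ssub uuc by blast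
    have HA: "\<forall>x\<in>(\<lambda>y. vv l \<sqinter>\<^bsub>L k\<^esub> y) ` (uu ` S). x \<sqsubseteq>\<^bsub>L k\<^esub> d"
    proof
      fix x assume "x \<in> (\<lambda>y. vv l \<sqinter>\<^bsub>L k\<^esub> y) ` (uu ` S)"
      then obtain m where m: "m\<in>S" "x = vv l \<sqinter>\<^bsub>L k\<^esub> uu m" by blast
      obtain s where s: "s\<in>S" "l \<le> s" "m \<le> s" using cof_dir[OF S] l m Ssub by blast
      have sL: "s\<in>\<Lambda>" "l\<in>\<Lambda>" "m\<in>\<Lambda>" using s l m Ssub by blast+
      have 1: "vv l \<sqinter>\<^bsub>L k\<^esub> uu m \<sqsubseteq>\<^bsub>L k\<^esub> vv s \<sqinter>\<^bsub>L k\<^esub> uu s"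
        using mmono[OF k _ _ vvc[OF sL(2)] uuc[OF sL(3)] vvc[OF sL(1)] uuc[OF sL(1)]] vvm uum s l m by blast
      have e: "vv s \<sqinter>\<^bsub>L k\<^esub> uu s = uu s \<sqinter>\<^bsub>L k\<^esub> vv s" by (rule meet_comm)
      have 2: "vv s \<sqinter>\<^bsub>L k\<^esub> uu s \<sqsubseteq>\<^bsub>L k\<^esub> d" unfolding e by (rule Hs[OF s(1)])
      show "x \<sqsubseteq>\<^bsub>L k\<^esub> d"
        unfolding m(2) by (rule ltrans[OF k 1 2 mcl[OF k vvc[OF sL(2)] uuc[OF sL(3)]] mcl[OF k vvc[OF sL(1)] uuc[OF sL(1)]] d])
    qed
    have "vv l \<sqinter>\<^bsub>L k\<^esub> u0 \<sqsubseteq>\<^bsub>L k\<^esub> d" by (rule lub_le[OF HL d HA])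
    moreover have "vv l \<sqinter>\<^bsub>L k\<^esub> u0 = u0 \<sqinter>\<^bsub>L k\<^esub> vv l" by (rule meet_comm)
    ultimately show ?thesis by simp
  qed
  have HL2: "is_lub (L k) (u0 \<sqinter>\<^bsub>L k\<^esub> v0) ((\<lambda>y. u0 \<sqinter>\<^bsub>L k\<^esub> y) ` (vv ` S))"
    using UC[OF u0c(1) _ dirV lubv] Ssub vvc by blast
  have HA2: "\<forall>x\<in>(\<lambda>y. u0 \<sqinter>\<^bsub>L k\<^esub> y) ` (vv ` S). x \<sqsubseteq>\<^bsub>L k\<^esub> d" using step by blast
  have "u0 \<sqinter>\<^bsub>L k\<^esub> v0 \<sqsubseteq>\<^bsub>L k\<^esub> d" by (rule lub_le[OF HL2 d HA2])
  then show ?thesis using n by simp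
qed

end


lemma ojoin_None1: "ojoin M None y = None" by (cases y) auto
lemma ojoin_None2: "ojoin M x None = None" by (cases x) auto

lemma set_ne: "set_lterm t \<noteq> {}" by (induction t) auto

context cont begin
declare Uf.simps(3)[simp del]

lemma Zcomps:
  assumes b: "b \<in> carrier (prodL L I)" and p: "set_lterm (LMeet p1 p2) \<subseteq> I \<times> UNIV" and k: "k\<in>I"
    and h: "ole (L k) (omeet (L k) (Uf (map_lterm b p1) k) (Uf (map_lterm b p2) k)) (Some z)"
  shows "\<exists>k'\<in>fst ` set_lterm (LMeet p1 p2). ole (L k') (omeet (L k') (Uf (map_lterm b p1) k') (Uf (map_lterm b p2) k')) (Some z)"
proof (cases "k \<in> fst ` set_lterm (LMeet p1 p2)")
  case True then show ?thesis using h by blast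
next
  case False
  have p1: "set_lterm p1 \<subseteq> I \<times> UNIV" "k \<notin> fst ` set_lterm p1" and p2: "set_lterm p2 \<subseteq> I \<times> UNIV" "k \<notin> fst ` set_lterm p2"
    using p False by auto
  have z1: "Uf (map_lterm b p1) k = None \<or> ole (L k) (Uf (map_lterm b p1) k) (Some z)" using Zred[OF b p1(1) k p1(2)] .
  have lr: "ole (L k) (Uf (map_lterm b p1) k) (Some z) \<or> ole (L k) (Uf (map_lterm b p2) k) (Some z)"
  proof (cases "Uf (map_lterm b p1) k")
    case None then show ?thesis using h by simp
  next
    case (Some c) then show ?thesis using z1 by simp
  qed
  obtain v where v: "v \<in> set_lterm (LMeet p1 p2)" using set_ne[of "LMeet p1 p2"] by blast
  then have k': "fst v \<in> I" using p by auto
  have "ole (L (fst v)) (omeet (L (fst v)) (Uf (map_lterm b p1) (fst v)) (Uf (map_lterm b p2) (fst v))) (Some z)"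
    using lr
  proof
    assume "ole (L k) (Uf (map_lterm b p1) k) (Some z)"
    then have "ole (L (fst v)) (Uf (map_lterm b p1) (fst v)) (Some z)" using ZL[OF k k'] by blast
    then show ?thesis using ole_trans[OF k' omeet_lb1[OF k' Ucar[OF k'] Ucar[OF k']] _ omeet_car[OF k' Ucar[OF k'] Ucar[OF k']] Ucar[OF k'] szc[OF k']] by blast
  next
    assume "ole (L k) (Uf (map_lterm b p2) k) (Some z)"
    then have "ole (L (fst v)) (Uf (map_lterm b p2) (fst v)) (Some z)" using ZL[OF k k'] by blast
    then show ?thesis using ole_trans[OF k' omeet_lb2[OF k' Ucar[OF k'] Ucar[OF k']] _ omeet_car[OF k' Ucar[OF k'] Ucar[OF k']] Ucar[OF k'] szc[OF k']] by blast
  qed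
  then show ?thesis using v by blast
qed

definition Kprop :: "('i \<times> nat) lterm \<Rightarrow> 'i \<Rightarrow> bool" where
  "Kprop p i \<longleftrightarrow> (\<forall>S c. cofinal S \<longrightarrow> c \<in> carrier (L i) \<longrightarrow>
       (\<forall>l\<in>S. ole (L i) (Uf (map_lterm (A l) p) i) (Some c)) \<longrightarrow> ole (L i) (Uf (map_lterm a p) i) (Some c))
     \<and> (Uf (map_lterm a p) i = None \<longrightarrow> (\<exists>l0\<in>\<Lambda>. \<forall>l\<in>\<Lambda>. l0 \<le> l \<longrightarrow> Uf (map_lterm (A l) p) i = None))"

lemma WK:
  assumes p1: "set_lterm p1 \<subseteq> I \<times> UNIV" and p2: "set_lterm p2 \<subseteq> I \<times> UNIV" and k: "k\<in>I"
    and K1: "Kprop p1 k" and K2: "Kprop p2 k" and S: "cofinal S" and d: "d \<in> carrier (L k)"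
    and H: "\<forall>l\<in>S. ole (L k) (omeet (L k) (Uf (map_lterm (A l) p1) k) (Uf (map_lterm (A l) p2) k)) (Some d)"
  shows "ole (L k) (omeet (L k) (Uf (map_lterm a p1) k) (Uf (map_lterm a p2) k)) (Some d)"
proof (rule omeet_cont[where u="\<lambda>l. Uf (map_lterm (A l) p1) k" and v="\<lambda>l. Uf (map_lterm (A l) p2) k"
    and ua="Uf (map_lterm a p1) k" and va="Uf (map_lterm a p2) k", OF k _ _ _ _ _ _ _ _ _ _ _ _ S d H])
  show "\<forall>l\<in>\<Lambda>. set_option (Uf (map_lterm (A l) p1) k) \<subseteq> carrier (L k)" using Ucar[OF k] by blast
  show "set_option (Uf (map_lterm a p1) k) \<subseteq> carrier (L k)" using Ucar[OF k] by blast
  show "\<forall>l\<in>\<Lambda>. ole (L k) (Uf (map_lterm (A l) p1) k) (Uf (map_lterm a p1) k)" using Umono[OF p1 _ k] by blast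
  show "\<forall>l\<in>\<Lambda>. \<forall>m\<in>\<Lambda>. l \<le> m \<longrightarrow> ole (L k) (Uf (map_lterm (A l) p1) k) (Uf (map_lterm (A m) p1) k)"
    using Umono2[OF p1 _ _ _ k] by blast
  show "\<forall>S c. cofinal S \<longrightarrow> c \<in> carrier (L k) \<longrightarrow> (\<forall>l\<in>S. ole (L k) (Uf (map_lterm (A l) p1) k) (Some c)) \<longrightarrow>
      ole (L k) (Uf (map_lterm a p1) k) (Some c)" using K1 unfolding Kprop_def by blast
  show "Uf (map_lterm a p1) k = None \<longrightarrow> (\<exists>l0\<in>\<Lambda>. \<forall>l\<in>\<Lambda>. l0 \<le> l \<longrightarrow> Uf (map_lterm (A l) p1) k = None)"
    using K1 unfolding Kprop_def by blast
  show "\<forall>l\<in>\<Lambda>. set_option (Uf (map_lterm (A l) p2) k) \<subseteq> carrier (L k)" using Ucar[OF k] by blast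
  show "set_option (Uf (map_lterm a p2) k) \<subseteq> carrier (L k)" using Ucar[OF k] by blast
  show "\<forall>l\<in>\<Lambda>. ole (L k) (Uf (map_lterm (A l) p2) k) (Uf (map_lterm a p2) k)" using Umono[OF p2 _ k] by blast
  show "\<forall>l\<in>\<Lambda>. \<forall>m\<in>\<Lambda>. l \<le> m \<longrightarrow> ole (L k) (Uf (map_lterm (A l) p2) k) (Uf (map_lterm (A m) p2) k)"
    using Umono2[OF p2 _ _ _ k] by blast
  show "\<forall>S c. cofinal S \<longrightarrow> c \<in> carrier (L k) \<longrightarrow> (\<forall>l\<in>S. ole (L k) (Uf (map_lterm (A l) p2) k) (Some c)) \<longrightarrow>
      ole (L k) (Uf (map_lterm a p2) k) (Some c)" using K2 unfolding Kprop_def by blast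
  show "Uf (map_lterm a p2) k = None \<longrightarrow> (\<exists>l0\<in>\<Lambda>. \<forall>l\<in>\<Lambda>. l0 \<le> l \<longrightarrow> Uf (map_lterm (A l) p2) k = None)"
    using K2 unfolding Kprop_def by blast
qed

lemma varz: "j\<in>I \<Longrightarrow> i\<in>I \<Longrightarrow> j \<noteq> i \<Longrightarrow> cofinal S \<Longrightarrow> \<forall>l\<in>S. A l (j,n) \<in> carrier (L i) \<Longrightarrow> a (j,n) = z"
proof -
  assume j: "j\<in>I" and i: "i\<in>I" and ji: "j \<noteq> i" and S: "cofinal S" and H: "\<forall>l\<in>S. A l (j,n) \<in> carrier (L i)"
  have "\<forall>l\<in>S. A l (j,n) = z" using H disj[OF j i ji] A_car[OF _ j] cof_sub[OF S] by blast
  then have "\<forall>l\<in>S. A l (j,n) \<sqsubseteq>\<^bsub>L j\<^esub> z" using lrefl[OF j zin[OF j]] by simp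
  then have "a (j,n) \<sqsubseteq>\<^bsub>L j\<^esub> z" using lubcomp[OF j S zin[OF j]] by blast
  then show "a (j,n) = z" using lanti[OF j _ zle[OF j a_car[OF j]] a_car[OF j] zin[OF j]] by blast
qed

lemma K: "set_lterm p \<subseteq> I \<times> UNIV \<Longrightarrow> i\<in>I \<Longrightarrow> Kprop p i"
proof (induction p arbitrary: i)
  case (LVar v)
  obtain j n where v: "v = (j,n)" "j\<in>I" using LVar.prems by (cases v) auto
  have i: "i\<in>I" by (rule LVar.prems(2))
  have A1: "ole (L i) (Uf (map_lterm a (LVar v)) i) (Some c)"
    if S: "cofinal S" and c: "c \<in> carrier (L i)" and H: "\<forall>l\<in>S. ole (L i) (Uf (map_lterm (A l) (LVar v)) i) (Some c)" for S c
  proof (cases "j = i")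
    case True
    have "\<forall>l\<in>S. A l (i,n) \<sqsubseteq>\<^bsub>L i\<^esub> c" using H v True A_car[OF _ i] cof_sub[OF S] by fastforce
    then have "a (i,n) \<sqsubseteq>\<^bsub>L i\<^esub> c" using lubcomp[OF i S c] by blast
    then show ?thesis using v True a_car[OF i] by simp
  next
    case False
    have "\<forall>l\<in>S. A l (j,n) \<in> carrier (L i)"
    proof
      fix l assume "l\<in>S"
      then have "ole (L i) (Uf (LVar (A l (j,n))) i) (Some c)" using H v by simp
      then show "A l (j,n) \<in> carrier (L i)" by (cases "A l (j,n) \<in> carrier (L i)") auto
    qed
    then have "a (j,n) = z" using varz[OF v(2) i False S] by blast
    then show ?thesis using v zin[OF i] zle[OF i c] by simp
  qed
  have A2: "\<exists>l0\<in>\<Lambda>. \<forall>l\<in>\<Lambda>. l0 \<le> l \<longrightarrow> Uf (map_lterm (A l) (LVar v)) i = None"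
    if N: "Uf (map_lterm a (LVar v)) i = None"
  proof (rule ccontr)
    assume n: "\<not> ?thesis"
    have an: "a (j,n) \<notin> carrier (L i)" using N v by (simp split: if_splits)
    then have ji: "j \<noteq> i" using a_car[OF i] by blast
    define S where "S = {l\<in>\<Lambda>. A l (j,n) \<in> carrier (L i)}"
    have "cofinal S" unfolding cofinal_def S_def
    proof (intro conjI ballI)
      fix l0 assume "l0\<in>\<Lambda>"
      then obtain l where "l\<in>\<Lambda>" "l0 \<le> l" "Uf (map_lterm (A l) (LVar v)) i \<noteq> None" using n by blast
      then show "\<exists>s\<in>{l \<in> \<Lambda>. A l (j, n) \<in> carrier (L i)}. l0 \<le> s" using v by (auto split: if_splits)
    qed auto
    then have "a (j,n) = z" using varz[OF v(2) i ji] unfolding S_def by blast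
    then show False using an zin[OF i] by simp
  qed
  show ?case unfolding Kprop_def using A1 A2 by blast
next
  case (LJoin p1 p2)
  have i: "i\<in>I" by (rule LJoin.prems(2))
  have pv: "set_lterm p1 \<subseteq> I \<times> UNIV" "set_lterm p2 \<subseteq> I \<times> UNIV" using LJoin.prems by auto
  have K1: "Kprop p1 i" "Kprop p2 i" using LJoin.IH pv i by blast+
  have A1: "ole (L i) (Uf (map_lterm a (LJoin p1 p2)) i) (Some c)"
    if S: "cofinal S" and c: "c \<in> carrier (L i)" and H: "\<forall>l\<in>S. ole (L i) (Uf (map_lterm (A l) (LJoin p1 p2)) i) (Some c)" for S c
  proof -
    have H1: "\<forall>l\<in>S. ole (L i) (Uf (map_lterm (A l) p1) i) (Some c)"
    proof
      fix l assume l: "l\<in>S"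
      have "ole (L i) (ojoin (L i) (Uf (map_lterm (A l) p1) i) (Uf (map_lterm (A l) p2) i)) (Some c)" using H l by simp
      then show "ole (L i) (Uf (map_lterm (A l) p1) i) (Some c)"
        using ole_trans[OF i ojoin_ub1[OF i Ucar[OF i] Ucar[OF i]] _ Ucar[OF i] ojoin_car[OF i Ucar[OF i] Ucar[OF i]]] c by simp
    qed
    have H2: "\<forall>l\<in>S. ole (L i) (Uf (map_lterm (A l) p2) i) (Some c)"
    proof
      fix l assume l: "l\<in>S"
      have "ole (L i) (ojoin (L i) (Uf (map_lterm (A l) p1) i) (Uf (map_lterm (A l) p2) i)) (Some c)" using H l by simp
      then show "ole (L i) (Uf (map_lterm (A l) p2) i) (Some c)"
        using ole_trans[OF i ojoin_ub2[OF i Ucar[OF i] Ucar[OF i]] _ Ucar[OF i] ojoin_car[OF i Ucar[OF i] Ucar[OF i]]] c by simp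
    qed
    have "ole (L i) (Uf (map_lterm a p1) i) (Some c)" using K1(1) S c H1 unfolding Kprop_def by blast
    moreover have "ole (L i) (Uf (map_lterm a p2) i) (Some c)" using K1(2) S c H2 unfolding Kprop_def by blast
    ultimately have "ole (L i) (ojoin (L i) (Uf (map_lterm a p1) i) (Uf (map_lterm a p2) i)) (Some c)"
      using ojoin_le[OF i _ _ Ucar[OF i] Ucar[OF i]] c by simp
    then show ?thesis by simp
  qed
  have A2: "\<exists>l0\<in>\<Lambda>. \<forall>l\<in>\<Lambda>. l0 \<le> l \<longrightarrow> Uf (map_lterm (A l) (LJoin p1 p2)) i = None"
    if N: "Uf (map_lterm a (LJoin p1 p2)) i = None"
  proof -
    have "Uf (map_lterm a p1) i = None \<or> Uf (map_lterm a p2) i = None"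
      using N by (cases "Uf (map_lterm a p1) i"; cases "Uf (map_lterm a p2) i") auto
    then show ?thesis
    proof
      assume "Uf (map_lterm a p1) i = None"
      then obtain l0 where l0: "l0\<in>\<Lambda>" "\<forall>l\<in>\<Lambda>. l0 \<le> l \<longrightarrow> Uf (map_lterm (A l) p1) i = None"
        using K1(1) unfolding Kprop_def by blast
      show ?thesis
      proof (rule bexI[of _ l0], intro ballI impI)
        fix l assume "l\<in>\<Lambda>" "l0 \<le> l"
        then have "Uf (map_lterm (A l) p1) i = None" using l0 by blast
        then show "Uf (map_lterm (A l) (LJoin p1 p2)) i = None" by (simp add: ojoin_None1)
      qed (rule l0(1))
    next
      assume "Uf (map_lterm a p2) i = None"
      then obtain l0 where l0: "l0\<in>\<Lambda>" "\<forall>l\<in>\<Lambda>. l0 \<le> l \<longrightarrow> Uf (map_lterm (A l) p2) i = None"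
        using K1(2) unfolding Kprop_def by blast
      show ?thesis
      proof (rule bexI[of _ l0], intro ballI impI)
        fix l assume "l\<in>\<Lambda>" "l0 \<le> l"
        then have "Uf (map_lterm (A l) p2) i = None" using l0 by blast
        then show "Uf (map_lterm (A l) (LJoin p1 p2)) i = None" by (simp add: ojoin_None2)
      qed (rule l0(1))
    qed
  qed
  show ?case unfolding Kprop_def using A1 A2 by blast
next
  case (LMeet p1 p2)
  have i: "i\<in>I" by (rule LMeet.prems(2))
  have pv: "set_lterm p1 \<subseteq> I \<times> UNIV" "set_lterm p2 \<subseteq> I \<times> UNIV" using LMeet.prems by auto
  have KK: "Kprop p1 k" "Kprop p2 k" if "k\<in>I" for k using LMeet.IH pv that by blast+
  define W where "W b k = omeet (L k) (Uf (map_lterm b p1) k) (Uf (map_lterm b p2) k)" for b k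
  define Zb where "Zb b \<longleftrightarrow> (\<exists>k\<in>I. ole (L k) (W b k) (Some z))" for b
  define C where "C = fst ` set_lterm (LMeet p1 p2)"
  have Cfin: "finite C" unfolding C_def by (simp add: lterm.set_finite)
  have CI: "C \<subseteq> I" using LMeet.prems(1) unfolding C_def by auto
  have Ueq: "Uf (map_lterm b (LMeet p1 p2)) i = (if Zb b then Some z else W b i)" for b
  proof (cases "Zb b")
    case True then show ?thesis using UmZ unfolding Zb_def W_def by simp
  next
    case False then show ?thesis using UmN unfolding Zb_def W_def by simp
  qed
  have Zc: "Zb (A l) \<Longrightarrow> l\<in>\<Lambda> \<Longrightarrow> \<exists>k\<in>C. ole (L k) (W (A l) k) (Some z)" for l
    using Zcomps[OF A_in LMeet.prems(1)] unfolding Zb_def W_def C_def by blast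
  have WKk: "ole (L k) (W a k) (Some d)" if "k\<in>I" "cofinal S" "d \<in> carrier (L k)" "\<forall>l\<in>S. ole (L k) (W (A l) k) (Some d)" for k S d
    using WK[OF pv that(1) KK[OF that(1)] that(2,3)] that(4) unfolding W_def by blast
  have A1: "ole (L i) (Uf (map_lterm a (LMeet p1 p2)) i) (Some c)"
    if S: "cofinal S" and c: "c \<in> carrier (L i)" and H: "\<forall>l\<in>S. ole (L i) (Uf (map_lterm (A l) (LMeet p1 p2)) i) (Some c)" for S c
  proof (cases "Zb a")
    case True then show ?thesis unfolding Ueq using zle[OF i c] by simp
  next
    case nZ: False
    define T where "T f = (case f of None \<Rightarrow> {l. ole (L i) (W (A l) i) (Some c)} | Some k \<Rightarrow> {l. ole (L k) (W (A l) k) (Some z)})" for f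
    have finF: "finite (insert None (Some ` C))" using Cfin by simp
    have cov: "S \<subseteq> (\<Union>f\<in>insert None (Some ` C). T f)"
    proof
      fix l assume l: "l\<in>S"
      then have lL: "l\<in>\<Lambda>" using cof_sub[OF S] by blast
      show "l \<in> (\<Union>f\<in>insert None (Some ` C). T f)"
      proof (cases "Zb (A l)")
        case True
        then obtain k where k: "k\<in>C" "ole (L k) (W (A l) k) (Some z)" using Zc lL by blast
        then have "l \<in> T (Some k)" unfolding T_def by simp
        moreover have "Some k \<in> insert None (Some ` C)" using k by blast
        ultimately show ?thesis by blast
      next
        case False
        have h: "ole (L i) (Uf (map_lterm (A l) (LMeet p1 p2)) i) (Some c)" using H l by blast
        then have "ole (L i) (if Zb (A l) then Some z else W (A l) i) (Some c)" unfolding Ueq .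
        then have "ole (L i) (W (A l) i) (Some c)" using False by simp
        then have "l \<in> T None" unfolding T_def by simp
        then show ?thesis by blast
      qed
    qed
    obtain f where f: "f \<in> insert None (Some ` C)" "cofinal (S \<inter> T f)" using cof_fin[OF finF S cov] by blast
    show ?thesis
    proof (cases f)
      case None
      then have "ole (L i) (W a i) (Some c)" using WKk[OF i f(2) c] unfolding T_def by simp
      then show ?thesis unfolding Ueq using nZ by simp
    next
      case (Some k)
      then have k: "k\<in>I" using f(1) CI by auto
      have "ole (L k) (W a k) (Some z)" using WKk[OF k f(2) zin[OF k]] Some unfolding T_def by simp
      then show ?thesis using nZ k unfolding Zb_def by blast
    qed
  qed
  have A2: "\<exists>l0\<in>\<Lambda>. \<forall>l\<in>\<Lambda>. l0 \<le> l \<longrightarrow> Uf (map_lterm (A l) (LMeet p1 p2)) i = None"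
    if N: "Uf (map_lterm a (LMeet p1 p2)) i = None"
  proof -
    have nZ: "\<not> Zb a" using N unfolding Ueq by (cases "Zb a") auto
    then have "W a i = None" using N unfolding Ueq by simp
    then have n12: "Uf (map_lterm a p1) i = None" "Uf (map_lterm a p2) i = None"
      unfolding W_def by (cases "Uf (map_lterm a p1) i"; cases "Uf (map_lterm a p2) i"; simp)+
    obtain l0 where l0: "l0\<in>\<Lambda>" "\<forall>l\<in>\<Lambda>. l0 \<le> l \<longrightarrow> Uf (map_lterm (A l) p1) i = None"
      using KK(1)[OF i] n12(1) unfolding Kprop_def by blast
    obtain l1 where l1: "l1\<in>\<Lambda>" "\<forall>l\<in>\<Lambda>. l1 \<le> l \<longrightarrow> Uf (map_lterm (A l) p2) i = None"
      using KK(2)[OF i] n12(2) unfolding Kprop_def by blast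
    have "\<exists>l2\<in>\<Lambda>. \<forall>l\<in>\<Lambda>. l2 \<le> l \<longrightarrow> \<not> Zb (A l)"
    proof (rule ccontr)
      assume nn: "\<not> ?thesis"
      define S where "S = {l\<in>\<Lambda>. Zb (A l)}"
      have S: "cofinal S" unfolding cofinal_def S_def using nn by auto
      define T where "T k = {l. ole (L k) (W (A l) k) (Some z)}" for k
      have cov: "S \<subseteq> (\<Union>k\<in>C. T k)"
      proof
        fix l assume "l \<in> S"
        then have "l\<in>\<Lambda>" "Zb (A l)" unfolding S_def by auto
        then obtain k where "k\<in>C" "ole (L k) (W (A l) k) (Some z)" using Zc by blast
        then show "l \<in> (\<Union>k\<in>C. T k)" unfolding T_def by blast
      qed
      obtain k where k: "k\<in>C" "cofinal (S \<inter> T k)" using cof_fin[OF Cfin S cov] by blast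
      have kI: "k\<in>I" using k CI by blast
      have "ole (L k) (W a k) (Some z)" using WKk[OF kI k(2) zin[OF kI]] unfolding T_def by simp
      then show False using nZ kI unfolding Zb_def by blast
    qed
    then obtain l2 where l2: "l2\<in>\<Lambda>" "\<forall>l\<in>\<Lambda>. l2 \<le> l \<longrightarrow> \<not> Zb (A l)" by blast
    obtain k1 where k1: "k1\<in>\<Lambda>" "l0 \<le> k1" "l1 \<le> k1" using dir[OF l0(1) l1(1)] by blast
    obtain k2 where k2: "k2\<in>\<Lambda>" "k1 \<le> k2" "l2 \<le> k2" using dir[OF k1(1) l2(1)] by blast
    have "Uf (map_lterm (A l) (LMeet p1 p2)) i = None" if l: "l\<in>\<Lambda>" "k2 \<le> l" for l
    proof -
      have "l0 \<le> l" "l1 \<le> l" "l2 \<le> l" using k1 k2 l order_trans by blast+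
      then have "\<not> Zb (A l)" "Uf (map_lterm (A l) p1) i = None" "Uf (map_lterm (A l) p2) i = None"
        using l0 l1 l2 l by blast+
      then show ?thesis unfolding Ueq unfolding W_def by simp
    qed
    then show ?thesis using k2(1) by blast
  qed
  show ?case unfolding Kprop_def using A1 A2 by blast
qed

end


lemma map_join: "map_lterm b p = LJoin x y \<Longrightarrow> \<exists>p0 p1. p = LJoin p0 p1 \<and> x = map_lterm b p0 \<and> y = map_lterm b p1"
  by (cases p) auto
lemma map_meet: "map_lterm b p = LMeet x y \<Longrightarrow> \<exists>p0 p1. p = LMeet p0 p1 \<and> x = map_lterm b p0 \<and> y = map_lterm b p1"
  by (cases p) auto

context cont begin
declare Uf.simps(3)[simp del]

lemma ple_disj: "ple X Y \<Longrightarrow> (\<exists>i\<in>I. ole (L i) (Uf X i) (Some (Df Y i))) \<or> (\<exists>x0 x1. X = LJoin x0 x1) \<or>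
   (\<exists>x0 x1. X = LMeet x0 x1 \<and> (ple x0 Y \<or> ple x1 Y)) \<or> (\<exists>y0 y1. Y = LMeet y0 y1) \<or>
   (\<exists>y0 y1. Y = LJoin y0 y1 \<and> (ple X y0 \<or> ple X y1))"
  by (erule ple.cases) blast+

lemma Hstep:
  assumes pv: "set_lterm p \<subseteq> I \<times> UNIV" and pnj: "\<And>p0 p1. p \<noteq> LJoin p0 p1" and qnm: "\<And>q0 q1. q \<noteq> LMeet q0 q1"
   and IHp: "\<And>p0 p1 S'. p = LMeet p0 p1 \<Longrightarrow> cofinal S' \<Longrightarrow> \<forall>l\<in>S'. ple (map_lterm (A l) p0) q \<Longrightarrow> ple (map_lterm a p0) q"
   and IHp': "\<And>p0 p1 S'. p = LMeet p0 p1 \<Longrightarrow> cofinal S' \<Longrightarrow> \<forall>l\<in>S'. ple (map_lterm (A l) p1) q \<Longrightarrow> ple (map_lterm a p1) q"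
   and IHq: "\<And>q0 q1 S'. q = LJoin q0 q1 \<Longrightarrow> cofinal S' \<Longrightarrow> \<forall>l\<in>S'. ple (map_lterm (A l) p) q0 \<Longrightarrow> ple (map_lterm a p) q0"
   and IHq': "\<And>q0 q1 S'. q = LJoin q0 q1 \<Longrightarrow> cofinal S' \<Longrightarrow> \<forall>l\<in>S'. ple (map_lterm (A l) p) q1 \<Longrightarrow> ple (map_lterm a p) q1"
   and S: "cofinal S" and H: "\<forall>l\<in>S. ple (map_lterm (A l) p) q"
  shows "ple (map_lterm a p) q"
proof -
  define C where "C = fst ` set_lterm p"
  have Cfin: "finite C" unfolding C_def by (simp add: lterm.set_finite)
  have CI: "C \<subseteq> I" using pv unfolding C_def by auto
  obtain v where v: "v \<in> set_lterm p" using set_ne[of p] by blast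
  have k0: "fst v \<in> C" "fst v \<in> I" using v CI unfolding C_def by auto
  define T :: "'i + nat \<Rightarrow> 'l set" where "T f = (case f of Inl i \<Rightarrow> {l. ole (L i) (Uf (map_lterm (A l) p) i) (Some (Df q i))}
     | Inr n \<Rightarrow> {l. (n = 0 \<and> (\<exists>p0 p1. p = LMeet p0 p1 \<and> ple (map_lterm (A l) p0) q))
                 \<or> (n = 1 \<and> (\<exists>p0 p1. p = LMeet p0 p1 \<and> ple (map_lterm (A l) p1) q))
                 \<or> (n = 2 \<and> (\<exists>q0 q1. q = LJoin q0 q1 \<and> ple (map_lterm (A l) p) q0))
                 \<or> (n = 3 \<and> (\<exists>q0 q1. q = LJoin q0 q1 \<and> ple (map_lterm (A l) p) q1))})" for f
  define F where "F = Inl ` C \<union> Inr ` {0,1,2,3::nat}"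
  have finF: "finite F" unfolding F_def using Cfin by simp
  have cov: "S \<subseteq> (\<Union>f\<in>F. T f)"
  proof
    fix l assume l: "l\<in>S"
    then have lL: "l\<in>\<Lambda>" using cof_sub[OF S] by blast
    have "ple (map_lterm (A l) p) q" using H l by blast
    then have D: "(\<exists>i\<in>I. ole (L i) (Uf (map_lterm (A l) p) i) (Some (Df q i))) \<or> (\<exists>x0 x1. map_lterm (A l) p = LJoin x0 x1) \<or>
      (\<exists>x0 x1. map_lterm (A l) p = LMeet x0 x1 \<and> (ple x0 q \<or> ple x1 q)) \<or> (\<exists>y0 y1. q = LMeet y0 y1) \<or>
      (\<exists>y0 y1. q = LJoin y0 y1 \<and> (ple (map_lterm (A l) p) y0 \<or> ple (map_lterm (A l) p) y1))" by (rule ple_disj)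
    show "l \<in> (\<Union>f\<in>F. T f)"
    proof -
      { assume "\<exists>i\<in>I. ole (L i) (Uf (map_lterm (A l) p) i) (Some (Df q i))"
        then obtain i where i: "i\<in>I" "ole (L i) (Uf (map_lterm (A l) p) i) (Some (Df q i))" by blast
        have ?thesis
        proof (cases "i \<in> C")
          case True
          then have "Inl i \<in> F" "l \<in> T (Inl i)" using i unfolding F_def T_def by auto
          then show ?thesis by blast
        next
          case False
          have "Uf (map_lterm (A l) p) i = None \<or> ole (L i) (Uf (map_lterm (A l) p) i) (Some z)"
            using Zred[OF A_in[OF lL] pv i(1)] False unfolding C_def by blast
          then have "ole (L i) (Uf (map_lterm (A l) p) i) (Some z)" using i(2) by auto
          then have "ole (L (fst v)) (Uf (map_lterm (A l) p) (fst v)) (Some z)" using ZL[OF i(1) k0(2)] by blast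
          then have "ole (L (fst v)) (Uf (map_lterm (A l) p) (fst v)) (Some (Df q (fst v)))"
            using ole_trans[OF k0(2) _ _ Ucar[OF k0(2)] szc[OF k0(2)] sDc[OF k0(2)]] Dge[OF k0(2)] by simp
          then have "Inl (fst v) \<in> F" "l \<in> T (Inl (fst v))" using k0 unfolding F_def T_def by auto
          then show ?thesis by blast
        qed }
      moreover
      { assume "\<exists>x0 x1. map_lterm (A l) p = LJoin x0 x1"
        then have False using map_join pnj by blast
        then have ?thesis by blast }
      moreover
      { assume "\<exists>x0 x1. map_lterm (A l) p = LMeet x0 x1 \<and> (ple x0 q \<or> ple x1 q)"
        then obtain x0 x1 where x: "map_lterm (A l) p = LMeet x0 x1" "ple x0 q \<or> ple x1 q" by blast
        then obtain p0 p1 where pp: "p = LMeet p0 p1" "x0 = map_lterm (A l) p0" "x1 = map_lterm (A l) p1"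
          using map_meet by blast
        have "(Inr 0 \<in> F \<and> l \<in> T (Inr 0)) \<or> (Inr 1 \<in> F \<and> l \<in> T (Inr 1))"
          using x(2) pp unfolding F_def T_def by auto
        then have ?thesis by blast }
      moreover
      { assume "\<exists>y0 y1. q = LMeet y0 y1"
        then have False using qnm by blast
        then have ?thesis by blast }
      moreover
      { assume "\<exists>y0 y1. q = LJoin y0 y1 \<and> (ple (map_lterm (A l) p) y0 \<or> ple (map_lterm (A l) p) y1)"
        then obtain y0 y1 where y: "q = LJoin y0 y1" "ple (map_lterm (A l) p) y0 \<or> ple (map_lterm (A l) p) y1" by blast
        have "(Inr 2 \<in> F \<and> l \<in> T (Inr 2)) \<or> (Inr 3 \<in> F \<and> l \<in> T (Inr 3))"
          using y unfolding F_def T_def by auto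
        then have ?thesis by blast }
      ultimately show ?thesis using D by blast
    qed
  qed
  obtain f where f: "f \<in> F" "cofinal (S \<inter> T f)" using cof_fin[OF finF S cov] by blast
  obtain l0 where l0: "l0 \<in> S \<inter> T f" using cof_ne[OF f(2)] by blast
  show ?thesis
  proof (cases f)
    case (Inl i)
    then have i: "i\<in>I" using f(1) CI unfolding F_def by auto
    have "Kprop p i" using K[OF pv i] .
    then have "ole (L i) (Uf (map_lterm a p) i) (Some (Df q i))"
      using f(2) Dcar[OF i] Inl unfolding Kprop_def T_def by auto
    then show ?thesis using ple.W0[OF i] by blast
  next
    case (Inr n)
    then have n: "n \<in> {0,1,2,3}" using f(1) unfolding F_def by auto
    then consider "n = 0" | "n = 1" | "n = 2" | "n = 3" by blast
    then show ?thesis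
    proof cases
      case 1
      obtain p0 p1 where pp: "p = LMeet p0 p1" using l0 Inr 1 unfolding T_def by auto
      have "\<forall>l\<in>S \<inter> T f. ple (map_lterm (A l) p0) q" using Inr 1 pp unfolding T_def by auto
      then have "ple (map_lterm a p0) q" using IHp[OF pp f(2)] by blast
      then show ?thesis using pp by (simp add: ple.W2a)
    next
      case 2
      obtain p0 p1 where pp: "p = LMeet p0 p1" using l0 Inr 2 unfolding T_def by auto
      have "\<forall>l\<in>S \<inter> T f. ple (map_lterm (A l) p1) q" using Inr 2 pp unfolding T_def by auto
      then have "ple (map_lterm a p1) q" using IHp'[OF pp f(2)] by blast
      then show ?thesis using pp by (simp add: ple.W2b)
    next
      case 3
      obtain q0 q1 where qq: "q = LJoin q0 q1" using l0 Inr 3 unfolding T_def by auto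
      have "\<forall>l\<in>S \<inter> T f. ple (map_lterm (A l) p) q0" using Inr 3 qq unfolding T_def by auto
      then have "ple (map_lterm a p) q0" using IHq[OF qq f(2)] by blast
      then show ?thesis using qq by (simp add: ple.W4a)
    next
      case 4
      obtain q0 q1 where qq: "q = LJoin q0 q1" using l0 Inr 4 unfolding T_def by auto
      have "\<forall>l\<in>S \<inter> T f. ple (map_lterm (A l) p) q1" using Inr 4 qq unfolding T_def by auto
      then have "ple (map_lterm a p) q1" using IHq'[OF qq f(2)] by blast
      then show ?thesis using qq by (simp add: ple.W4b)
    qed
  qed
qed

end


context cont begin
declare Uf.simps(3)[simp del]

lemma Qlemma:
  assumes pv: "set_lterm p \<subseteq> I \<times> UNIV" and pnj: "\<And>p0 p1. p \<noteq> LJoin p0 p1"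
   and IHp: "\<And>p0 p1 q S'. p = LMeet p0 p1 \<Longrightarrow> cofinal S' \<Longrightarrow> \<forall>l\<in>S'. ple (map_lterm (A l) p0) q \<Longrightarrow> ple (map_lterm a p0) q"
   and IHp': "\<And>p0 p1 q S'. p = LMeet p0 p1 \<Longrightarrow> cofinal S' \<Longrightarrow> \<forall>l\<in>S'. ple (map_lterm (A l) p1) q \<Longrightarrow> ple (map_lterm a p1) q"
  shows "cofinal S \<Longrightarrow> \<forall>l\<in>S. ple (map_lterm (A l) p) q \<Longrightarrow> ple (map_lterm a p) q"
proof (induction q arbitrary: S)
  case (LVar x)
  show ?case
    by (rule Hstep[OF pv pnj _ IHp IHp' _ _ LVar.prems]) auto
next
  case (LJoin q0 q1)
  show ?case
    by (rule Hstep[OF pv pnj _ IHp IHp' _ _ LJoin.prems]) (use LJoin.IH in auto)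
next
  case (LMeet q0 q1)
  have "\<forall>l\<in>S. ple (map_lterm (A l) p) q0 \<and> ple (map_lterm (A l) p) q1"
  proof
    fix l assume l: "l\<in>S"
    have h: "ple (map_lterm (A l) p) (LMeet q0 q1)" using LMeet.prems(2) l by blast
    show "ple (map_lterm (A l) p) q0 \<and> ple (map_lterm (A l) p) q1" using inv_meet_r[OF h HOL.refl] .
  qed
  then have "ple (map_lterm a p) q0" "ple (map_lterm a p) q1" using LMeet.IH LMeet.prems(1) by blast+
  then show ?case by (rule ple.W3)
qed

lemma mainle: "set_lterm p \<subseteq> I \<times> UNIV \<Longrightarrow> cofinal S \<Longrightarrow> \<forall>l\<in>S. ple (map_lterm (A l) p) q \<Longrightarrow> ple (map_lterm a p) q"
proof (induction p arbitrary: q S)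
  case (LVar v)
  show ?case by (rule Qlemma[OF LVar.prems(1) _ _ _ LVar.prems(2,3)]) auto
next
  case (LJoin p1 p2)
  have pv: "set_lterm p1 \<subseteq> I \<times> UNIV" "set_lterm p2 \<subseteq> I \<times> UNIV" using LJoin.prems by auto
  have "\<forall>l\<in>S. ple (map_lterm (A l) p1) q \<and> ple (map_lterm (A l) p2) q"
  proof
    fix l assume l: "l\<in>S"
    have h: "ple (map_lterm (A l) (LJoin p1 p2)) q" using LJoin.prems(3) l by blast
    show "ple (map_lterm (A l) p1) q \<and> ple (map_lterm (A l) p2) q"
      using inv_join_l[OF h, of "map_lterm (A l) p1" "map_lterm (A l) p2"] by simp
  qed
  then have "ple (map_lterm a p1) q" "ple (map_lterm a p2) q" using LJoin.IH pv LJoin.prems(2) by blast+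
  then show ?case by (simp add: ple.W1)
next
  case (LMeet p1 p2)
  have pv: "set_lterm p1 \<subseteq> I \<times> UNIV" "set_lterm p2 \<subseteq> I \<times> UNIV" using LMeet.prems by auto
  show ?case by (rule Qlemma[OF LMeet.prems(1) _ _ _ LMeet.prems(2,3)]) (use LMeet.IH pv in auto)
qed

lemma class_mem: "set_lterm s \<subseteq> G \<Longrightarrow> s \<in> cp_class L I z s"
  unfolding cp_class_def by (auto intro: cp_le.refl)

lemma co_le: "Y \<sqsubseteq>\<^bsub>coprod0 L I z\<^esub> Z \<longleftrightarrow> (\<exists>s\<in>Y. \<exists>t\<in>Z. cp_le L I z s t)"
  by (simp add: coprod0_def)

lemma co_car: "carrier (coprod0 L I z) = {cp_class L I z s | s. set_lterm s \<subseteq> G}"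
  by (simp add: coprod0_def)

lemma final: "set_lterm p \<subseteq> I \<times> UNIV \<Longrightarrow>
  is_lub (coprod0 L I z) (cp_class L I z (map_lterm a p)) ((\<lambda>l. cp_class L I z (map_lterm (A l) p)) ` \<Lambda>)"
proof -
  assume pv: "set_lterm p \<subseteq> I \<times> UNIV"
  define X where "X = cp_class L I z (map_lterm a p)"
  have aG: "set_lterm (map_lterm a p) \<subseteq> G" using subst_G[OF a_in pv] .
  have AG: "set_lterm (map_lterm (A l) p) \<subseteq> G" if "l\<in>\<Lambda>" for l using subst_G[OF A_in[OF that] pv] .
  have Xc: "X \<in> carrier (coprod0 L I z)" unfolding X_def co_car using aG by blast
  have ub: "cp_class L I z (map_lterm (A l) p) \<sqsubseteq>\<^bsub>coprod0 L I z\<^esub> X" if l: "l\<in>\<Lambda>" for l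
  proof -
    have "ple (map_lterm (A l) p) (map_lterm a p)"
      by (rule ple_subst[OF A_in[OF l] a_in _ pv]) (use a_up l in blast)
    then have "cp_le L I z (map_lterm (A l) p) (map_lterm a p)" using ple_sound AG[OF l] aG by blast
    then show ?thesis unfolding co_le X_def using class_mem[OF AG[OF l]] class_mem[OF aG] by blast
  qed
  have least: "X \<sqsubseteq>\<^bsub>coprod0 L I z\<^esub> Y"
    if Y: "Y \<in> carrier (coprod0 L I z)" "\<forall>l\<in>\<Lambda>. cp_class L I z (map_lterm (A l) p) \<sqsubseteq>\<^bsub>coprod0 L I z\<^esub> Y" for Y
  proof -
    obtain q where q: "Y = cp_class L I z q" "set_lterm q \<subseteq> G" using Y(1) unfolding co_car by blast
    have "ple (map_lterm (A l) p) q" if l: "l\<in>\<Lambda>" for l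
    proof -
      obtain s t where st: "s \<in> cp_class L I z (map_lterm (A l) p)" "t \<in> Y" "cp_le L I z s t"
        using Y(2) l unfolding co_le by blast
      have "cp_le L I z (map_lterm (A l) p) s" "cp_le L I z t q" using st q unfolding cp_class_def by auto
      then have "cp_le L I z (map_lterm (A l) p) q" using st(3) cp_tr by blast
      then show ?thesis by (rule cp_ple)
    qed
    then have "ple (map_lterm a p) q" using mainle[OF pv cof_L] by blast
    then have "cp_le L I z (map_lterm a p) q" using ple_sound aG q(2) by blast
    then show ?thesis unfolding co_le X_def using class_mem[OF aG] class_mem[OF q(2)] q(1) by blast
  qed
  have classc: "cp_class L I z (map_lterm (A l) p) \<in> carrier (coprod0 L I z)" if "l\<in>\<Lambda>" for l
    unfolding co_car using AG[OF that] by blast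
  have XU: "X \<in> Upper (coprod0 L I z) ((\<lambda>l. cp_class L I z (map_lterm (A l) p)) ` \<Lambda>)"
    unfolding Upper_def using Xc ub by auto
  have XL: "\<forall>Y\<in>Upper (coprod0 L I z) ((\<lambda>l. cp_class L I z (map_lterm (A l) p)) ` \<Lambda>). X \<sqsubseteq>\<^bsub>coprod0 L I z\<^esub> Y"
  proof
    fix Y assume "Y \<in> Upper (coprod0 L I z) ((\<lambda>l. cp_class L I z (map_lterm (A l) p)) ` \<Lambda>)"
    then have Y: "Y \<in> carrier (coprod0 L I z)" "\<forall>x. x \<in> (\<lambda>l. cp_class L I z (map_lterm (A l) p)) ` \<Lambda> \<and> x \<in> carrier (coprod0 L I z) \<longrightarrow> x \<sqsubseteq>\<^bsub>coprod0 L I z\<^esub> Y"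
      unfolding Upper_def by auto
    have "\<forall>l\<in>\<Lambda>. cp_class L I z (map_lterm (A l) p) \<sqsubseteq>\<^bsub>coprod0 L I z\<^esub> Y"
      using Y(2) classc by blast
    then show "X \<sqsubseteq>\<^bsub>coprod0 L I z\<^esub> Y" using least Y(1) by blast
  qed
  have "Upper (coprod0 L I z) ((\<lambda>l. cp_class L I z (map_lterm (A l) p)) ` \<Lambda>) \<subseteq> carrier (coprod0 L I z)"
    unfolding Upper_def by blast
  then show ?thesis unfolding X_def[symmetric] least_def using XU XL by blast
qed

end

theorem lemma4p4:
  fixes L :: "'i \<Rightarrow> 'a gorder" and I :: "'i set" and z :: 'a
    and \<Lambda> :: "'l::order set" and A :: "'l \<Rightarrow> ('i \<times> nat \<Rightarrow> 'a)"
    and a :: "'i \<times> nat \<Rightarrow> 'a" and p :: "('i \<times> nat) lterm"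
  assumes lat: "\<forall>i\<in>I. lattice (L i)"
    and zero: "\<forall>i\<in>I. z \<in> carrier (L i) \<and> (\<forall>x\<in>carrier (L i). z \<sqsubseteq>\<^bsub>L i\<^esub> x)"
    and uc: "\<forall>i\<in>I. upper_continuous (L i)"
    and disj: "\<forall>i\<in>I. \<forall>j\<in>I. i \<noteq> j \<longrightarrow> carrier (L i) \<inter> carrier (L j) = {z}"
    and dir: "\<Lambda> \<noteq> {}" "\<forall>l\<in>\<Lambda>. \<forall>m\<in>\<Lambda>. \<exists>k\<in>\<Lambda>. l \<le> k \<and> m \<le> k"
    and A_in: "\<forall>l\<in>\<Lambda>. A l \<in> carrier (prodL L I)"
    and iso: "\<forall>l\<in>\<Lambda>. \<forall>m\<in>\<Lambda>. l \<le> m \<longrightarrow> A l \<sqsubseteq>\<^bsub>prodL L I\<^esub> A m"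
    and a_in: "a \<in> carrier (prodL L I)"
    and a_sup: "is_lub (prodL L I) a (A ` \<Lambda>)"
    and p_vars: "set_lterm p \<subseteq> I \<times> UNIV"
  shows "is_lub (coprod0 L I z) (cp_class L I z (lsubst a p))
           ((\<lambda>l. cp_class L I z (lsubst (A l) p)) ` \<Lambda>)"
proof -
  have Ine: "I \<noteq> {}" using p_vars set_ne[of p] by auto
  interpret cont L I z \<Lambda> A a
    by (intro cont.intro cpx.intro cont_axioms.intro) (use lat zero uc disj dir A_in iso a_in a_sup Ine in auto)
  show ?thesis using final[OF p_vars] .
qed


end
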